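(* Let $G$ be a finite group with $|G| = 30p$, where $p$ is a prime with $p \ge 7$. Then: (1) the commutator subgroup $G'$ is cyclic; (2) $G' \cap Z(G) = \{e\}$; (3) $G \cong \mathbb{Z}_n \ltimes G'$ for some positive integer $n$; and (4) if $b$ is a generator of the factor $\mathbb{Z}_n$ in (3), and $\tau \in \mathbb{Z}$ is chosen such that $x^b = x^\tau$ for all $x \in G'$, then $\gcd(\tau - 1, |G'|) = 1$.
   Context: $G' = [G,G]$ is the commutator subgroup, $Z(G)$ the center, and $x^b = b^{-1} x b$ denotes conjugation. *)

theory Defs
  imports "HOL-Algebra.Algebra"
begin

definition group_center :: "('a, 'b) monoid_scheme \<Rightarrow> 'a set" where
  "group_center G = {z \<in> carrier G. \<forall>g \<in> carrier G. z \<otimes>\<^bsub>G\<^esub> g = g \<otimes>\<^bsub>G\<^esub> z}"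

text \<open>Internal semidirect product with cyclic complement: b generates a cyclic
  subgroup (isomorphic to Z_n, n = ord b) which is a complement of the normal
  subgroup N, i.e. G = <b> N and <b> \<inter> N = 1. Then G is isomorphic to
  Z_n \<ltimes> N, with Z_n acting on N by conjugation by b.\<close>
definition cyclic_complement_gen :: "('a, 'b) monoid_scheme \<Rightarrow> 'a set \<Rightarrow> 'a \<Rightarrow> bool" where
  "cyclic_complement_gen G N b \<longleftrightarrow>
     b \<in> carrier G \<and>
     generate G {b} \<inter> N = {\<one>\<^bsub>G\<^esub>} \<and>
     generate G {b} <#>\<^bsub>G\<^esub> N = carrier G"

end

theory Submission
  imports Defs
begin


context group begin

lemma sub_card_dvd:
  assumes "finite (carrier G)" "subgroup H G" "subgroup K G" "K \<subseteq> H"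
  shows "card K dvd card H"
proof -
  interpret H: group "G\<lparr>carrier := H\<rparr>" using assms subgroup_imp_group by blast
  have "subgroup K (G\<lparr>carrier := H\<rparr>)" using assms subgroup_incl by blast
  then have "card (rcosets\<^bsub>G\<lparr>carrier := H\<rparr>\<^esub> K) * card K = order (G\<lparr>carrier := H\<rparr>)"
    using H.lagrange by blast
  then show ?thesis unfolding order_def by (metis dvd_triv_right partial_object.select_convs(1) partial_object.surjective partial_object.update_convs(1))
qed

lemma sub_card_dvd_order:
  assumes "finite (carrier G)" "subgroup H G"
  shows "card H dvd order G"
  using sub_card_dvd[OF assms(1) subgroup_self assms(2)] assms(2) subgroup.subset
  unfolding order_def by blast

lemma finite_sub:
  assumes "finite (carrier G)" "subgroup H G" shows "finite H"
  using assms finite_subset subgroup.subset by blast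

lemma sub_eq_card:
  assumes "finite (carrier G)" "subgroup H G" "K \<subseteq> H" "card K = card H"
  shows "K = H"
  using assms card_subset_eq finite_sub by blast

lemma ord_in_sub_dvd:
  assumes "finite (carrier G)" "subgroup H G" "x \<in> H"
  shows "ord x dvd card H"
proof -
  have x: "x \<in> carrier G" using assms subgroup.subset by blast
  have "generate G {x} \<subseteq> H" using assms generate_subgroup_incl by blast
  then show ?thesis using sub_card_dvd[OF assms(1,2) generate_is_subgroup] x generate_pow_card[OF x]
    by auto
qed

lemma prime_sub_gen:
  assumes "finite (carrier G)" "subgroup H G" "Factorial_Ring.prime (card H)" "x \<in> H" "x \<noteq> \<one>"
  shows "generate G {x} = H" "ord x = card H"
proof -
  have x: "x \<in> carrier G" using assms subgroup.subset by blast
  have "ord x dvd card H" using ord_in_sub_dvd assms by blast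
  moreover have "ord x \<noteq> 1" using ord_eq_1 x assms by blast
  ultimately show o: "ord x = card H" using assms(3) prime_nat_iff by blast
  have "generate G {x} \<subseteq> H" using assms generate_subgroup_incl by blast
  then show "generate G {x} = H" using sub_eq_card[OF assms(1,2)] generate_pow_card[OF x] o by simp
qed

lemma prime_sub_inter:
  assumes "finite (carrier G)" "subgroup H G" "Factorial_Ring.prime (card H)" "subgroup K G" "\<not> H \<subseteq> K"
  shows "H \<inter> K = {\<one>}"
proof -
  have "subgroup (H \<inter> K) G" using assms subgroups_Inter_pair by blast
  then have "card (H \<inter> K) dvd card H" using sub_card_dvd assms by blast
  then have "card (H \<inter> K) = 1 \<or> card (H \<inter> K) = card H" using assms(3) prime_nat_iff by blast
  moreover have "card (H \<inter> K) \<noteq> card H"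
    using sub_eq_card[OF assms(1,2), of "H \<inter> K"] assms(5) by blast
  ultimately have "card (H \<inter> K) = 1" by blast
  moreover have "\<one> \<in> H \<inter> K" using assms subgroup.one_closed by blast
  ultimately show ?thesis by (metis card_1_singletonE singletonD)
qed

lemma ord_prime_sub:
  assumes "finite (carrier G)" "x \<in> carrier G"
  shows "subgroup (generate G {x}) G" "card (generate G {x}) = ord x" "x \<in> generate G {x}"
  using generate_is_subgroup assms generate_pow_card generate.incl[of x "{x}" G] by auto

end


context group begin

lemma mcancel1 [simp]: "x \<in> carrier G \<Longrightarrow> y \<in> carrier G \<Longrightarrow> x \<otimes> (inv x \<otimes> y) = y"
  by (simp add: m_assoc[symmetric])
lemma mcancel2 [simp]: "x \<in> carrier G \<Longrightarrow> y \<in> carrier G \<Longrightarrow> inv x \<otimes> (x \<otimes> y) = y"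
  by (simp add: m_assoc[symmetric])

lemma conj_eq:
  assumes "g \<in> carrier G" "H \<subseteq> carrier G"
  shows "g <# H #> inv g = (\<lambda>h. g \<otimes> h \<otimes> inv g) ` H"
  unfolding l_coset_def r_coset_def by auto

lemma conj_sub:
  assumes "subgroup H G" "g \<in> carrier G"
  shows "subgroup (g <# H #> inv g) G"
  using assms subgroup_conjugation_is_surj2 by blast

lemma conj_card:
  assumes "g \<in> carrier G" "H \<subseteq> carrier G"
  shows "card (g <# H #> inv g) = card H"
proof -
  have "inj_on (\<lambda>h. g \<otimes> h \<otimes> inv g) H"
  proof (rule inj_onI)
    fix x y assume "x \<in> H" "y \<in> H" "g \<otimes> x \<otimes> inv g = g \<otimes> y \<otimes> inv g"
    then show "x = y" using conjugation_is_inj[of g x y] assms by blast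
  qed
  then show ?thesis using conj_eq[OF assms] card_image by metis
qed

lemma normalizer_iff:
  assumes "H \<subseteq> carrier G"
  shows "g \<in> normalizer G H \<longleftrightarrow> g \<in> carrier G \<and> g <# H #> inv g = H"
  using assms unfolding normalizer_def stabilizer_def by auto

lemma normalizer_elem:
  assumes "H \<subseteq> carrier G" "g \<in> normalizer G H" "h \<in> H"
  shows "g \<otimes> h \<otimes> inv g \<in> H"
proof -
  have "g \<in> carrier G" "g <# H #> inv g = H" using normalizer_iff assms by auto
  then show ?thesis using conj_eq assms by blast
qed

lemma normalizer_I:
  assumes "finite (carrier G)" "H \<subseteq> carrier G" "g \<in> carrier G" "\<forall>h\<in>H. g \<otimes> h \<otimes> inv g \<in> H"
  shows "g \<in> normalizer G H"
proof -
  have "g <# H #> inv g \<subseteq> H" using assms conj_eq by auto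
  moreover have "card (g <# H #> inv g) = card H" using conj_card assms by blast
  moreover have "finite H" using assms finite_subset by blast
  ultimately have "g <# H #> inv g = H" by (simp add: card_subset_eq)
  then show ?thesis using normalizer_iff assms by blast
qed

lemma sub_normalizer:
  assumes "finite (carrier G)" "subgroup H G"
  shows "H \<subseteq> normalizer G H"
proof
  fix g assume g: "g \<in> H"
  have "g \<in> carrier G" using g assms subgroup.subset by blast
  moreover have "\<forall>h\<in>H. g \<otimes> h \<otimes> inv g \<in> H" using g assms(2)
    by (intro ballI subgroup.m_closed subgroup.m_inv_closed) auto
  ultimately show "g \<in> normalizer G H" by (rule normalizer_I[OF assms(1) subgroup.subset[OF assms(2)]])
qed

lemma normalizer_sub:
  assumes "H \<subseteq> carrier G" shows "subgroup (normalizer G H) G"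
  using normalizer_imp_subgroup assms by blast

lemma prod_sub:
  assumes "subgroup H G" "subgroup K G" "\<forall>h\<in>H. \<forall>k\<in>K. h \<otimes> k \<otimes> inv h \<in> K"
  shows "subgroup (H <#> K) G"
proof (rule subgroupI)
  interpret H: subgroup H G by fact
  interpret K: subgroup K G by fact
  show "H <#> K \<subseteq> carrier G" unfolding set_mult_def by auto
  show "H <#> K \<noteq> {}" unfolding set_mult_def using H.one_closed K.one_closed by blast
  fix a assume "a \<in> H <#> K"
  then obtain h k where hk: "h \<in> H" "k \<in> K" "a = h \<otimes> k" unfolding set_mult_def by auto
  have c: "h \<in> carrier G" "k \<in> carrier G" using hk by auto
  have "inv a = inv h \<otimes> (h \<otimes> inv k \<otimes> inv h)"
    using c hk by (simp add: inv_mult_group m_assoc[symmetric])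
  moreover have "h \<otimes> inv k \<otimes> inv h \<in> K" using assms hk by auto
  ultimately show "inv a \<in> H <#> K" using hk unfolding set_mult_def by auto
next
  interpret H: subgroup H G by fact
  interpret K: subgroup K G by fact
  fix a b assume "a \<in> H <#> K" "b \<in> H <#> K"
  then obtain h k h' k' where hk: "h \<in> H" "k \<in> K" "a = h \<otimes> k" "h' \<in> H" "k' \<in> K" "b = h' \<otimes> k'"
    unfolding set_mult_def by auto
  have c: "h \<in> carrier G" "k \<in> carrier G" "h' \<in> carrier G" "k' \<in> carrier G" using hk by auto
  have "a \<otimes> b = (h \<otimes> h') \<otimes> ((inv h' \<otimes> k \<otimes> inv (inv h')) \<otimes> k')"
    using c hk by (simp add: m_assoc)
  moreover have "inv h' \<otimes> k \<otimes> inv (inv h') \<in> K" using assms(3) hk H.m_inv_closed by blast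
  ultimately show "a \<otimes> b \<in> H <#> K" using hk unfolding set_mult_def by auto
qed

lemma prod_card:
  assumes "finite (carrier G)" "subgroup H G" "subgroup K G" "H \<inter> K = {\<one>}"
  shows "card (H <#> K) = card H * card K"
proof -
  interpret H: subgroup H G by fact
  interpret K: subgroup K G by fact
  have eq: "H <#> K = (\<lambda>(h,k). h \<otimes> k) ` (H \<times> K)" unfolding set_mult_def by auto
  have "inj_on (\<lambda>(h,k). h \<otimes> k) (H \<times> K)"
  proof (rule inj_onI, clarify)
    fix h k h' k' assume hk: "h \<in> H" "k \<in> K" "h' \<in> H" "k' \<in> K" "h \<otimes> k = h' \<otimes> k'"
    have c: "h \<in> carrier G" "k \<in> carrier G" "h' \<in> carrier G" "k' \<in> carrier G" using hk by auto
    have "inv h' \<otimes> h = inv h' \<otimes> (h \<otimes> k) \<otimes> inv k" using c by (simp add: m_assoc)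
    also have "\<dots> = inv h' \<otimes> (h' \<otimes> k') \<otimes> inv k" using hk by simp
    also have "\<dots> = k' \<otimes> inv k" using c by (simp add: m_assoc[symmetric])
    finally have "inv h' \<otimes> h = k' \<otimes> inv k" .
    moreover have "inv h' \<otimes> h \<in> H" "k' \<otimes> inv k \<in> K" using hk by auto
    ultimately have "inv h' \<otimes> h = \<one>" using assms(4) by auto
    then have "h = h'" using c proof -
      have "h' \<otimes> (inv h' \<otimes> h) = h'" using \<open>inv h' \<otimes> h = \<one>\<close> c by simp
      then show ?thesis using c by (simp add: m_assoc[symmetric])
    qed
    then show "h = h' \<and> k = k'" using hk c by auto
  qed
  moreover have "finite H" "finite K" using assms finite_sub by auto
  ultimately show ?thesis using eq card_image card_cartesian_product by metis
qed

end


context group begin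

lemma exists_prime_sub:
  assumes "finite (carrier G)" "Factorial_Ring.prime q" "q dvd order G"
  shows "\<exists>Q. subgroup Q G \<and> card Q = q"
proof -
  obtain m where m: "order G = q * m" using assms by blast
  have "sylow G q 1 m" unfolding sylow_eq
    using assms m by (simp add: sylow_axioms_def is_group)
  then show ?thesis using sylow.sylow_thm by fastforce
qed

definition conjact where "conjact = (\<lambda>g. \<lambda>H \<in> {H. subgroup H G}. g <# H #> inv g)"

lemma conjact_action: "group_action G {H. subgroup H G} conjact"
  unfolding conjact_def using action_by_conjugation_on_subgroups_set .

lemma conjact_apply: "subgroup H G \<Longrightarrow> conjact g H = g <# H #> inv g"
  unfolding conjact_def by simp

lemma finite_subgroups: "finite (carrier G) \<Longrightarrow> finite {H. subgroup H G}"
  by (rule finite_subset[of _ "Pow (carrier G)"]) (auto dest: subgroup.subset)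

lemma count_mod:
  assumes fin: "finite (carrier G)" and Q: "subgroup Q G" "Factorial_Ring.prime (card Q)"
    and Y: "Y \<subseteq> {H. subgroup H G}" and cl: "\<forall>g\<in>Q. \<forall>H\<in>Y. g <# H #> inv g \<in> Y"
  shows "card Y mod (card Q) = card {H\<in>Y. \<forall>g\<in>Q. g <# H #> inv g = H} mod (card Q)"
proof -
  let ?q = "card Q"
  let ?GQ = "G\<lparr>carrier := Q\<rparr>"
  let ?F = "{H\<in>Y. \<forall>g\<in>Q. g <# H #> inv g = H}"
  let ?Z = "Y - ?F"
  interpret A: group_action ?GQ "{H. subgroup H G}" conjact
    using group_action.induced_action[OF conjact_action Q(1)] .
  interpret GQ: group ?GQ using Q subgroup_imp_group by blast
  have ordGQ: "order ?GQ = ?q" unfolding order_def by simp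
  have finE: "finite {H. subgroup H G}" using finite_subgroups fin by blast
  have finY: "finite Y" using Y finE finite_subset by blast
  have ZE: "?Z \<subseteq> {H. subgroup H G}" using Y by blast
  have orb: "orbit ?GQ conjact x = {g <# x #> inv g | g. g \<in> Q}" if "subgroup x G" for x
    unfolding orbit_def using conjact_apply that by auto
  have orbZ: "orbit ?GQ conjact x \<subseteq> ?Z" if x: "x \<in> ?Z" for x
  proof
    fix y assume "y \<in> orbit ?GQ conjact x"
    moreover have xs: "subgroup x G" using x Y by blast
    ultimately obtain g where g: "g \<in> Q" "y = g <# x #> inv g" using orb by blast
    have yY: "y \<in> Y" using cl g x by blast
    have gc: "g \<in> carrier G" using g Q subgroup.subset by blast
    have "y \<notin> ?F"
    proof
      assume yF: "y \<in> ?F"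
      have "inv g \<in> Q" by (rule subgroup.m_inv_closed[OF Q(1) g(1)])
      then have "inv g <# y #> inv (inv g) = y" using yF by blast
      moreover have "inv g <# y #> inv (inv g) = x"
      proof -
        have "inv g <# (inv (inv g) <# x #> inv g) #> inv (inv g) = x"
          by (rule subgroup_conjugation_is_surj0) (use gc xs subgroup.subset in auto)
        then show ?thesis unfolding inv_inv[OF gc] g(2) .
      qed
      ultimately have "x = y" by simp
      then show False using x yF by blast
    qed
    then show "y \<in> ?Z" using yY by blast
  qed
  define r where "r = {(x,y). x \<in> ?Z \<and> y \<in> ?Z \<and> y \<in> orbit ?GQ conjact x}"
  have eqv: "equiv ?Z r"
  proof (rule equivI)
    show "refl_on ?Z r" unfolding r_def refl_on_def using A.orbit_refl ZE by blast
    show "sym r" unfolding r_def sym_def using A.orbit_sym ZE by blast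
    show "trans r" unfolding r_def trans_def using A.orbit_trans ZE by blast
  qed (auto simp: r_def)
  have "?q dvd card ?Z"
  proof (rule equiv_imp_dvd_card[OF _ eqv])
    show "finite ?Z" using finY by blast
    fix Xo assume "Xo \<in> ?Z // r"
    then obtain x where x: "x \<in> ?Z" "Xo = r `` {x}" unfolding quotient_def by blast
    have "r `` {x} = {y. y \<in> ?Z \<and> y \<in> orbit ?GQ conjact x}" using x(1) unfolding r_def by blast
    also have "\<dots> = orbit ?GQ conjact x" using orbZ[OF x(1)] by blast
    finally have Xo: "Xo = orbit ?GQ conjact x" using x(2) by simp
    have xE: "x \<in> {H. subgroup H G}" using x ZE by blast
    have cs: "card Xo * card (stabilizer ?GQ conjact x) = ?q"
      using A.orbit_stabilizer_theorem[OF xE] Xo ordGQ by simp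
    have "card Xo \<noteq> 1"
    proof
      assume "card Xo = 1"
      moreover have "x \<in> Xo" using Xo A.orbit_refl xE by blast
      ultimately have "Xo = {x}" by (metis card_1_singletonE singletonD)
      then have "\<forall>g\<in>Q. g <# x #> inv g = x" using orb xE Xo by auto
      then show False using x by blast
    qed
    moreover have "card Xo dvd ?q" using cs by (metis dvd_triv_left)
    ultimately have "card Xo = ?q" using Q(2) prime_nat_iff by blast
    then show "?q dvd card Xo" by simp
  qed
  moreover have "card Y = card ?Z + card ?F"
    using finY by (metis (no_types, lifting) Diff_subset card_Diff_subset finite_subset mem_Collect_eq subsetI card_mono le_add_diff_inverse2)
  ultimately show ?thesis by (auto elim!: dvdE)
qed

end


context group begin

lemma fix_eq:
  assumes fin: "finite (carrier G)" and q: "Factorial_Ring.prime q" "\<not> q^2 dvd order G"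
    and Q: "subgroup Q G" "card Q = q" and Q': "subgroup Q' G" "card Q' = q"
    and fx: "\<forall>g\<in>Q. g <# Q' #> inv g = Q'"
  shows "Q = Q'"
proof (rule ccontr)
  assume ne: "Q \<noteq> Q'"
  have "\<not> Q \<subseteq> Q'" using sub_eq_card[OF fin Q'(1), of Q] Q Q' ne by auto
  then have int: "Q \<inter> Q' = {\<one>}" using prime_sub_inter[OF fin Q(1) _ Q'(1)] Q q by auto
  have "\<forall>h\<in>Q. \<forall>k\<in>Q'. h \<otimes> k \<otimes> inv h \<in> Q'"
  proof (intro ballI)
    fix h k assume h: "h \<in> Q" and k: "k \<in> Q'"
    have hc: "h \<in> carrier G" using h Q subgroup.subset by blast
    have "h \<otimes> k \<otimes> inv h \<in> h <# Q' #> inv h"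
      using conj_eq[OF hc subgroup.subset[OF Q'(1)]] k by blast
    then show "h \<otimes> k \<otimes> inv h \<in> Q'" using fx h by simp
  qed
  then have "subgroup (Q <#> Q') G" using prod_sub Q Q' by blast
  then have "card (Q <#> Q') dvd order G" using sub_card_dvd_order fin by blast
  moreover have "card (Q <#> Q') = q^2" using prod_card[OF fin Q(1) Q'(1) int] Q Q' by (simp add: power2_eq_square)
  ultimately show False using q by simp
qed

lemma conj_in_X:
  assumes "subgroup H G" "g \<in> carrier G"
  shows "subgroup (g <# H #> inv g) G \<and> card (g <# H #> inv g) = card H"
  using conj_sub conj_card assms subgroup.subset by blast

lemma self_conj:
  assumes "finite (carrier G)" "subgroup Q G" "g \<in> Q"
  shows "g <# Q #> inv g = Q"
  using sub_normalizer[OF assms(1,2)] normalizer_iff subgroup.subset assms by blast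

lemma sylow_main:
  assumes fin: "finite (carrier G)" and q: "Factorial_Ring.prime q" "\<not> q^2 dvd order G"
    and Q: "subgroup Q G" "card Q = q"
  shows "\<forall>H. subgroup H G \<and> card H = q \<longrightarrow> (\<exists>g\<in>carrier G. H = g <# Q #> inv g)"
    and "card {H. subgroup H G \<and> card H = q} * card (normalizer G Q) = order G"
    and "card {H. subgroup H G \<and> card H = q} mod q = 1"
proof -
  let ?X = "{H. subgroup H G \<and> card H = q}"
  let ?O = "orbit G conjact Q"
  interpret A: group_action G "{H. subgroup H G}" conjact by (rule conjact_action)
  have O: "?O = {g <# Q #> inv g | g. g \<in> carrier G}"
    unfolding orbit_def using conjact_apply Q by auto
  have OX: "?O \<subseteq> ?X" unfolding O using conj_in_X Q by auto
  have QO: "Q \<in> ?O" using A.orbit_refl Q by blast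
  have Ocl: "\<forall>g\<in>carrier G. \<forall>H\<in>?O. g <# H #> inv g \<in> ?O"
  proof (intro ballI)
    fix g H assume g: "g \<in> carrier G" and H: "H \<in> ?O"
    have Hs: "subgroup H G" using H OX by blast
    have "conjact g H \<in> orbit G conjact H" unfolding orbit_def using g by blast
    moreover have "conjact g H \<in> {H. subgroup H G}" using conjact_apply Hs conj_sub g by simp
    ultimately have "conjact g H \<in> ?O" using A.orbit_trans[of Q H "conjact g H"] Q Hs H by blast
    then show "g <# H #> inv g \<in> ?O" using conjact_apply Hs by simp
  qed
  have fixQ: "{H\<in>Y. \<forall>g\<in>Q. g <# H #> inv g = H} = {Q}" if "Q \<in> Y" "Y \<subseteq> ?X" for Y
  proof
    show "{Q} \<subseteq> {H\<in>Y. \<forall>g\<in>Q. g <# H #> inv g = H}" using that self_conj[OF fin Q(1)] by blast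
    show "{H\<in>Y. \<forall>g\<in>Q. g <# H #> inv g = H} \<subseteq> {Q}"
      using fix_eq[OF fin q Q] that by blast
  qed
  have q1: "q > 1" using q prime_gt_1_nat by blast
  have Qp: "Factorial_Ring.prime (card Q)" using Q q by simp
  have OE: "?O \<subseteq> {H. subgroup H G}" using OX by blast
  have OclQ: "\<forall>g\<in>Q. \<forall>H\<in>?O. g <# H #> inv g \<in> ?O" using Ocl Q subgroup.subset by blast
  have cO: "card ?O mod q = 1"
    using count_mod[OF fin Q(1) Qp OE OclQ] Q fixQ[OF QO OX] q1 by auto
  have XE: "?X \<subseteq> {H. subgroup H G}" by blast
  have Xcl: "\<forall>g\<in>Q. \<forall>H\<in>?X. g <# H #> inv g \<in> ?X"
    using conj_in_X Q subgroup.subset by blast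
  show "card ?X mod q = 1"
    using count_mod[OF fin Q(1) Qp XE Xcl] fixQ[of ?X] Q q1 by auto
  have XO: "?X \<subseteq> ?O"
  proof
    fix H assume H: "H \<in> ?X"
    show "H \<in> ?O"
    proof (rule ccontr)
      assume nH: "H \<notin> ?O"
      have Hp: "Factorial_Ring.prime (card H)" using H q by simp
      have e: "{K\<in>?O. \<forall>g\<in>H. g <# K #> inv g = K} = {}"
        using fix_eq[OF fin q, of H] H OX nH by blast
      have "\<forall>g\<in>H. \<forall>K\<in>?O. g <# K #> inv g \<in> ?O"
        using Ocl H subgroup.subset by blast
      from count_mod[OF fin _ Hp OE this] H have "card ?O mod q = card {K\<in>?O. \<forall>g\<in>H. g <# K #> inv g = K} mod q" by simp
      then have "card ?O mod q = 0" unfolding e by simp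
      then show False using cO by simp
    qed
  qed
  then have XeqO: "?X = ?O" using OX by blast
  then show "\<forall>H. subgroup H G \<and> card H = q \<longrightarrow> (\<exists>g\<in>carrier G. H = g <# Q #> inv g)"
    using O by blast
  have "stabilizer G conjact Q = normalizer G Q"
    unfolding stabilizer_def using normalizer_iff[OF subgroup.subset[OF Q(1)]] conjact_apply[OF Q(1)] by auto
  then show "card ?X * card (normalizer G Q) = order G"
    using A.orbit_stabilizer_theorem[of Q] Q XeqO by simp
qed

end


context group begin

lemma q_dvd_normalizer:
  assumes fin: "finite (carrier G)" and Q: "subgroup Q G"
  shows "card Q dvd card (normalizer G Q)"
  using sub_card_dvd[OF fin normalizer_sub[OF subgroup.subset[OF Q]] Q sub_normalizer[OF fin Q]] .

lemma unique_normal: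
  assumes fin: "finite (carrier G)" and q: "Factorial_Ring.prime q" "\<not> q^2 dvd order G"
    and Q: "subgroup Q G" "card Q = q"
    and one: "card {H. subgroup H G \<and> card H = q} = 1"
  shows "\<forall>g\<in>carrier G. \<forall>h\<in>Q. g \<otimes> h \<otimes> inv g \<in> Q"
proof -
  have "card (normalizer G Q) = order G" using sylow_main(2)[OF fin q Q] one by simp
  then have "normalizer G Q = carrier G"
    using sub_eq_card[OF fin subgroup_self, of "normalizer G Q"] normalizer_sub[OF subgroup.subset[OF Q(1)]]
      subgroup.subset unfolding order_def by blast
  then show ?thesis using normalizer_elem[OF subgroup.subset[OF Q(1)]] by blast
qed

definition nonid where "nonid q = \<Union>{Q - {\<one>} | Q. subgroup Q G \<and> card Q = q}"

lemma card_nonid: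
  assumes fin: "finite (carrier G)" and q: "Factorial_Ring.prime q"
  shows "card (nonid q) = card {H. subgroup H G \<and> card H = q} * (q - 1)"
proof -
  let ?X = "{H. subgroup H G \<and> card H = q}"
  have finX: "finite ?X" using finite_subgroups[OF fin] by (rule finite_subset[rotated]) blast
  have "nonid q = (\<Union>Q\<in>?X. Q - {\<one>})" unfolding nonid_def by blast
  moreover have "card (\<Union>Q\<in>?X. Q - {\<one>}) = (\<Sum>Q\<in>?X. card (Q - {\<one>}))"
  proof (rule card_UN_disjoint[OF finX])
    show "\<forall>Q\<in>?X. finite (Q - {\<one>})" using finite_sub[OF fin] by blast
    show "\<forall>Q\<in>?X. \<forall>Q'\<in>?X. Q \<noteq> Q' \<longrightarrow> (Q - {\<one>}) \<inter> (Q' - {\<one>}) = {}"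
    proof (intro ballI impI)
      fix Q Q' assume Q: "Q \<in> ?X" and Q': "Q' \<in> ?X" and ne: "Q \<noteq> Q'"
      have "\<not> Q \<subseteq> Q'" using sub_eq_card[OF fin, of Q' Q] Q Q' ne by auto
      then have "Q \<inter> Q' = {\<one>}" using prime_sub_inter[OF fin, of Q Q'] Q Q' q by auto
      then show "(Q - {\<one>}) \<inter> (Q' - {\<one>}) = {}" by blast
    qed
  qed
  moreover have "\<forall>Q\<in>?X. card (Q - {\<one>}) = q - 1"
  proof
    fix Q assume Q: "Q \<in> ?X"
    then have "finite Q" "\<one> \<in> Q" using finite_sub[OF fin] subgroup.one_closed by auto
    then show "card (Q - {\<one>}) = q - 1" using Q by (simp add: card_Diff_singleton)
  qed
  ultimately show ?thesis by simp
qed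

lemma nonid_sub: "nonid q \<subseteq> carrier G - {\<one>}"
  unfolding nonid_def using subgroup.subset by blast

lemma nonid_disj:
  assumes fin: "finite (carrier G)" and "Factorial_Ring.prime q" "Factorial_Ring.prime r" "q \<noteq> r"
  shows "nonid q \<inter> nonid r = {}"
proof -
  have "False" if x: "x \<in> nonid q" "x \<in> nonid r" for x
  proof -
    obtain Q where Q: "subgroup Q G" "card Q = q" "x \<in> Q" "x \<noteq> \<one>" using x unfolding nonid_def by blast
    obtain R where R: "subgroup R G" "card R = r" "x \<in> R" "x \<noteq> \<one>" using x unfolding nonid_def by blast
    have "ord x = q" using prime_sub_gen(2)[OF fin Q(1) _ Q(3,4)] Q assms by simp
    moreover have "ord x = r" using prime_sub_gen(2)[OF fin R(1) _ R(3,4)] R assms by simp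
    ultimately show False using assms by simp
  qed
  then show ?thesis by blast
qed

lemma count_two:
  assumes fin: "finite (carrier G)" and "Factorial_Ring.prime q" "Factorial_Ring.prime r" "q \<noteq> r"
  shows "card {H. subgroup H G \<and> card H = q} * (q - 1) + card {H. subgroup H G \<and> card H = r} * (r - 1) \<le> order G - 1"
proof -
  have "card (nonid q \<union> nonid r) = card (nonid q) + card (nonid r)"
    using nonid_disj[OF assms] fin nonid_sub by (intro card_Un_disjoint) (auto intro: finite_subset)
  moreover have "card (nonid q \<union> nonid r) \<le> card (carrier G - {\<one>})"
    using nonid_sub fin by (intro card_mono) auto
  ultimately show ?thesis using card_nonid[OF fin] assms unfolding order_def by (simp add: card_Diff_singleton)
qed

lemma pq_norm:
  assumes fin: "finite (carrier G)" and S: "subgroup S G" "card S = r * s"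
    and pr: "Factorial_Ring.prime r" "Factorial_Ring.prime s" "r \<noteq> s" "s mod r \<noteq> 1"
    and R: "subgroup R G" "R \<subseteq> S" "card R = r"
  shows "\<forall>x\<in>S. \<forall>y\<in>R. x \<otimes> y \<otimes> inv x \<in> R"
proof -
  let ?S = "G\<lparr>carrier := S\<rparr>"
  interpret GS: group ?S using S subgroup_imp_group by blast
  have finS: "finite (carrier ?S)" using finite_sub[OF fin S(1)] by simp
  have RS: "subgroup R ?S" using subgroup_incl R S by blast
  have oS: "order ?S = r * s" using S unfolding order_def by simp
  have nd: "\<not> r^2 dvd order ?S"
  proof
    assume "r^2 dvd order ?S"
    then have "r * r dvd r * s" using oS by (simp add: power2_eq_square)
    then have "r dvd s" using pr prime_gt_0_nat by simp
    then show False using pr by (metis prime_nat_iff prime_gt_1_nat less_irrefl)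
  qed
  let ?X = "{H. subgroup H ?S \<and> card H = r}"
  have m1: "card ?X * card (normalizer ?S R) = r * s" and m2: "card ?X mod r = 1"
    using GS.sylow_main(2,3)[OF finS pr(1) nd RS R(3)] oS by auto
  have "r dvd card (normalizer ?S R)" using GS.q_dvd_normalizer[OF finS RS] R by simp
  then obtain k where "card (normalizer ?S R) = r * k" by blast
  then have "card ?X * k = s" using m1 pr prime_gt_0_nat by (simp add: algebra_simps)
  then have "card ?X dvd s" by (metis dvd_triv_left)
  then have "card ?X = 1 \<or> card ?X = s" using pr prime_nat_iff by blast
  then have c1: "card ?X = 1" using m2 pr by auto
  have RX: "R \<in> ?X" using RS R by blast
  have finX: "finite ?X" using GS.finite_subgroups[OF finS] by (rule finite_subset[rotated]) blast
  have Xeq: "?X = {R}" using c1 RX finX by (metis card_1_singletonE singletonD)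
  show ?thesis
  proof (intro ballI)
    fix x y assume x: "x \<in> S" and y: "y \<in> R"
    have xc: "x \<in> carrier ?S" using x by simp
    have "x <#\<^bsub>?S\<^esub> R #>\<^bsub>?S\<^esub> inv\<^bsub>?S\<^esub> x \<in> ?X"
      using GS.conj_in_X[OF RS xc] R by simp
    then have eq: "x <#\<^bsub>?S\<^esub> R #>\<^bsub>?S\<^esub> inv\<^bsub>?S\<^esub> x = R" using Xeq by blast
    have "x \<otimes>\<^bsub>?S\<^esub> y \<otimes>\<^bsub>?S\<^esub> inv\<^bsub>?S\<^esub> x \<in> R"
      using GS.conj_eq[OF xc subgroup.subset[OF RS]] eq y by blast
    then show "x \<otimes> y \<otimes> inv x \<in> R" using m_inv_consistent[OF S(1) x] by simp
  qed
qed

lemma index2_normal: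
  assumes fin: "finite (carrier G)" and M: "subgroup M G" and o: "order G = 2 * card M"
  shows "\<forall>g\<in>carrier G. \<forall>m\<in>M. g \<otimes> m \<otimes> inv g \<in> M"
proof (intro ballI)
  fix g m assume g: "g \<in> carrier G" and m: "m \<in> M"
  interpret M: subgroup M G by fact
  show "g \<otimes> m \<otimes> inv g \<in> M"
  proof (cases "g \<in> M")
    case True then show ?thesis using m by simp
  next
    case False
    have finM: "finite M" using finite_sub[OF fin M] .
    have inj: "inj_on (\<lambda>h. g \<otimes> h) M"
    proof (rule inj_onI)
      fix x y assume "x \<in> M" "y \<in> M" "g \<otimes> x = g \<otimes> y"
      then show "x = y" using g M.subset l_cancel[of g x y] by auto
    qed
    have "g <# M = (\<lambda>h. g \<otimes> h) ` M" unfolding l_coset_def by blast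
    then have c1: "card (g <# M) = card M" using card_image[OF inj] by simp
    have "M #> g \<in> rcosets M" using g M.subset by (intro rcosetsI)
    then have c2: "card (M #> g) = card M" using card_rcosets_equal[of "M #> g" M] M.subset by simp
    have d1: "(g <# M) \<inter> M = {}"
    proof (rule ccontr)
      assume "(g <# M) \<inter> M \<noteq> {}"
      then obtain y where y: "y \<in> g <# M" "y \<in> M" by blast
      then obtain h where "h \<in> M" "y = g \<otimes> h" unfolding l_coset_def by blast
      then have h: "h \<in> M" "g \<otimes> h \<in> M" using y by auto
      then have "g \<otimes> h \<otimes> inv h \<in> M" by simp
      then have "g \<in> M" using h g by (simp add: m_assoc)
      then show False using False by simp
    qed
    have d2: "(M #> g) \<inter> M = {}"
    proof (rule ccontr)
      assume "(M #> g) \<inter> M \<noteq> {}"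
      then obtain y where y: "y \<in> M #> g" "y \<in> M" by blast
      then obtain h where "h \<in> M" "y = h \<otimes> g" unfolding r_coset_def by blast
      then have h: "h \<in> M" "h \<otimes> g \<in> M" using y by auto
      then have "inv h \<otimes> (h \<otimes> g) \<in> M" by simp
      then have "g \<in> M" using h g by simp
      then show False using False by simp
    qed
    have s1: "g <# M \<subseteq> carrier G - M" using d1 g M.subset l_coset_subset_G by blast
    have s2: "M #> g \<subseteq> carrier G - M" using d2 g M.subset r_coset_subset_G by blast
    have cc: "card (carrier G - M) = card M" using o M.subset fin finM unfolding order_def
      by (simp add: card_Diff_subset)
    have e1: "g <# M = carrier G - M" using s1 c1 cc fin by (metis card_subset_eq finite_Diff)
    have e2: "M #> g = carrier G - M" using s2 c2 cc fin by (metis card_subset_eq finite_Diff)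
    have "g \<otimes> m \<in> g <# M" unfolding l_coset_def using m by blast
    then have "g \<otimes> m \<in> M #> g" using e1 e2 by simp
    then obtain m' where m': "m' \<in> M" "g \<otimes> m = m' \<otimes> g" unfolding r_coset_def by blast
    then have "g \<otimes> m \<otimes> inv g = m'" using g m by (simp add: m_assoc)
    then show ?thesis using m' by simp
  qed
qed

lemma prime_order_comm:
  assumes fin: "finite (carrier G)" and p: "Factorial_Ring.prime (order G)"
  shows "comm_group G"
proof -
  have "card (carrier G) \<ge> 2" using p prime_ge_2_nat unfolding order_def by blast
  then have "card (carrier G - {\<one>}) > 0" using fin by (simp add: card_Diff_singleton)
  then have "carrier G - {\<one>} \<noteq> {}" by (metis card.empty less_irrefl)
  then obtain x where x: "x \<in> carrier G" "x \<noteq> \<one>" by blast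
  have "generate G {x} = carrier G"
    using prime_sub_gen(1)[OF fin subgroup_self _ x] p unfolding order_def by simp
  then have "carrier G = {x [^] (k::int) | k. k \<in> UNIV}" using generate_pow[OF x(1)] by simp
  then have "carrier G = range (\<lambda>n::int. x [^] n)" by blast
  then have "cyclic_group G" using cyclic_group x by blast
  then show ?thesis using cyclic_imp_abelian_group by blast
qed

end


definition sqf :: "nat \<Rightarrow> bool" where
  "sqf n \<longleftrightarrow> (\<forall>q. Factorial_Ring.prime q \<longrightarrow> \<not> q^2 dvd n)"

lemma sqf_dvd: "sqf n \<Longrightarrow> m dvd n \<Longrightarrow> sqf m"
  unfolding sqf_def using dvd_trans by blast

lemma sqf_primes_dvd:
  "sqf n \<Longrightarrow> n > 0 \<Longrightarrow> (\<forall>q. Factorial_Ring.prime q \<and> q dvd n \<longrightarrow> q dvd m) \<Longrightarrow> n dvd m"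
proof (induction n rule: less_induct)
  case (less n)
  show ?case
  proof (cases "n = 1")
    case True then show ?thesis by simp
  next
    case False
    then obtain q where q: "Factorial_Ring.prime q" "q dvd n"
      using prime_factor_nat by blast
    then obtain n' where n': "n = q * n'" by blast
    have q1: "q > 1" using q prime_gt_1_nat by blast
    have n'pos: "n' > 0" using n' less.prems by auto
    have lt: "n' < n" using n' q1 n'pos by simp
    have sq': "sqf n'" using sqf_dvd[OF less.prems(1)] n' by simp
    have nd: "\<not> q dvd n'"
    proof
      assume "q dvd n'"
      then have "q^2 dvd n" using n' by (simp add: power2_eq_square)
      then show False using less.prems(1) q unfolding sqf_def by blast
    qed
    have "n' dvd m" using less.IH[OF lt sq' n'pos] less.prems(3) n' by (meson dvd_trans dvd_triv_right)
    moreover have "q dvd m" using less.prems(3) q by blast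
    moreover have "coprime q n'" using prime_imp_coprime q nd by blast
    ultimately show ?thesis using n' by (simp add: divides_mult)
  qed
qed

context group begin

lemma ord_mult_coprime:
  assumes x: "x \<in> carrier G" and y: "y \<in> carrier G" and c: "x \<otimes> y = y \<otimes> x"
    and cp: "coprime (ord x) (ord y)"
  shows "ord (x \<otimes> y) = ord x * ord y"
proof -
  let ?n = "ord (x \<otimes> y)"
  have "(x \<otimes> y) [^] ?n = \<one>" using x y by simp
  then have e: "x [^] ?n \<otimes> y [^] ?n = \<one>" using pow_mult_distrib[OF c x y] by simp
  let ?z = "x [^] ?n"
  have z: "?z = inv (y [^] ?n)" using inv_equality[of "x [^] ?n" "y [^] ?n"] e x y by simp
  have "?z [^] ord x = \<one>" using x
    by (metis mult.commute nat_pow_one nat_pow_pow pow_ord_eq_1)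
  then have d1: "ord ?z dvd ord x" using pow_eq_id x by simp
  have "(y [^] ?n) [^] ord y = \<one>" using y
    by (metis mult.commute nat_pow_one nat_pow_pow pow_ord_eq_1)
  then have "?z [^] ord y = \<one>" using z y by (simp add: nat_pow_inv)
  then have d2: "ord ?z dvd ord y" using pow_eq_id x by simp
  have "ord ?z = 1" using d1 d2 cp by (meson coprime_common_divisor_nat coprime_def)
  then have z1: "?z = \<one>" using ord_eq_1 x by simp
  then have "y [^] ?n = \<one>" using e y by simp
  then have "ord y dvd ?n" using pow_eq_id y by simp
  moreover have "ord x dvd ?n" using z1 pow_eq_id x by simp
  ultimately have "ord x * ord y dvd ?n" using cp by (simp add: divides_mult)
  moreover have "?n dvd ord x * ord y" using ord_mul_divides[OF c x y] .
  ultimately show ?thesis by (simp add: dvd_antisym)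
qed

lemma prime_sub_comm:
  assumes fin: "finite (carrier G)" and R: "subgroup R G" "Factorial_Ring.prime (card R)"
    and x: "x \<in> R" and y: "y \<in> R"
  shows "x \<otimes> y = y \<otimes> x"
proof (cases "x = \<one>")
  case True
  have "y \<in> carrier G" using y subgroup.subset[OF R(1)] by blast
  then show ?thesis using True by simp
next
  case False
  have xc: "x \<in> carrier G" using x R subgroup.subset by blast
  have "generate G {x} = R" using prime_sub_gen(1)[OF fin R x False] .
  then obtain k :: int where "y = x [^] k" using y generate_pow[OF xc] by blast
  moreover have "x \<otimes> x [^] k = x [^] (1 + k)" using int_pow_mult[of x 1 k] xc by simp
  moreover have "x [^] k \<otimes> x = x [^] (k + 1)" using int_pow_mult[of x k 1] xc by simp
  ultimately show ?thesis by (simp add: add.commute)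
qed

lemma prod_comm:
  assumes A: "A \<subseteq> carrier G" and B: "B \<subseteq> carrier G"
    and cA: "\<forall>x\<in>A. \<forall>y\<in>A. x \<otimes> y = y \<otimes> x" and cB: "\<forall>x\<in>B. \<forall>y\<in>B. x \<otimes> y = y \<otimes> x"
    and cAB: "\<forall>x\<in>A. \<forall>y\<in>B. x \<otimes> y = y \<otimes> x"
  shows "\<forall>u\<in>A <#> B. \<forall>v\<in>A <#> B. u \<otimes> v = v \<otimes> u"
proof (intro ballI)
  fix u v assume "u \<in> A <#> B" "v \<in> A <#> B"
  then obtain a b a' b' where ab: "a \<in> A" "b \<in> B" "u = a \<otimes> b" "a' \<in> A" "b' \<in> B" "v = a' \<otimes> b'"
    unfolding set_mult_def by blast
  have c: "a \<in> carrier G" "b \<in> carrier G" "a' \<in> carrier G" "b' \<in> carrier G" using ab A B by auto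
  have "u \<otimes> v = a \<otimes> (b \<otimes> a') \<otimes> b'" using ab c by (simp add: m_assoc)
  also have "\<dots> = a \<otimes> (a' \<otimes> b) \<otimes> b'" using cAB ab by metis
  also have "\<dots> = (a \<otimes> a') \<otimes> (b \<otimes> b')" using c by (simp add: m_assoc)
  also have "\<dots> = (a' \<otimes> a) \<otimes> (b' \<otimes> b)" using cA cB ab by metis
  also have "\<dots> = a' \<otimes> (a \<otimes> b') \<otimes> b" using c by (simp add: m_assoc)
  also have "\<dots> = a' \<otimes> (b' \<otimes> a) \<otimes> b" using cAB ab by metis
  also have "\<dots> = v \<otimes> u" using ab c by (simp add: m_assoc)
  finally show "u \<otimes> v = v \<otimes> u" .
qed

lemma sub_of_sub:
  assumes "subgroup S G" "subgroup R (G\<lparr>carrier := S\<rparr>)"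
  shows "subgroup R G" "R \<subseteq> S"
  using incl_subgroup assms subgroup.subset by fastforce+

lemma exists_prime_sub_in:
  assumes fin: "finite (carrier G)" and S: "subgroup S G" and q: "Factorial_Ring.prime q" "q dvd card S"
  shows "\<exists>R. subgroup R G \<and> R \<subseteq> S \<and> card R = q"
proof -
  interpret GS: group "G\<lparr>carrier := S\<rparr>" using S subgroup_imp_group by blast
  have "finite (carrier (G\<lparr>carrier := S\<rparr>))" using finite_sub[OF fin S] by simp
  moreover have "q dvd order (G\<lparr>carrier := S\<rparr>)" using q unfolding order_def by simp
  ultimately obtain R where "subgroup R (G\<lparr>carrier := S\<rparr>)" "card R = q"
    using GS.exists_prime_sub q by blast
  then show ?thesis using sub_of_sub[OF S] by blast
qed

lemma order15_comm:
  assumes fin: "finite (carrier G)" and S: "subgroup S G" "card S = 15"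
  shows "\<forall>x\<in>S. \<forall>y\<in>S. x \<otimes> y = y \<otimes> x"
proof -
  have p3: "Factorial_Ring.prime (3::nat)" and p5: "Factorial_Ring.prime (5::nat)" by simp_all
  obtain R3 where R3: "subgroup R3 G" "R3 \<subseteq> S" "card R3 = 3"
    using exists_prime_sub_in[OF fin S(1) p3] S by auto
  obtain R5 where R5: "subgroup R5 G" "R5 \<subseteq> S" "card R5 = 5"
    using exists_prime_sub_in[OF fin S(1) p5] S by auto
  have n5: "\<forall>x\<in>S. \<forall>y\<in>R5. x \<otimes> y \<otimes> inv x \<in> R5"
    using pq_norm[OF fin S(1), of 5 3] S R5 by simp
  have n3: "\<forall>x\<in>S. \<forall>y\<in>R3. x \<otimes> y \<otimes> inv x \<in> R3"
    using pq_norm[OF fin S(1), of 3 5] S R3 by simp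
  have "\<not> R3 \<subseteq> R5"
  proof
    assume "R3 \<subseteq> R5"
    then have "card R3 dvd card R5" using sub_card_dvd[OF fin R5(1) R3(1)] by blast
    then show False using R3 R5 by simp
  qed
  then have int: "R3 \<inter> R5 = {\<one>}" using prime_sub_inter[OF fin R3(1) _ R5(1)] R3 by simp
  have cross: "\<forall>x\<in>R3. \<forall>y\<in>R5. x \<otimes> y = y \<otimes> x"
  proof (intro ballI)
    fix x y assume x: "x \<in> R3" and y: "y \<in> R5"
    interpret R3: subgroup R3 G by fact
    interpret R5: subgroup R5 G by fact
    have xc: "x \<in> carrier G" and yc: "y \<in> carrier G" using x y by auto
    let ?c = "x \<otimes> y \<otimes> inv x \<otimes> inv y"
    have "x \<otimes> y \<otimes> inv x \<in> R5" using n5 x y R3 by blast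
    then have c5: "?c \<in> R5" using y by simp
    have "y \<otimes> inv x \<otimes> inv y \<in> R3" using n3 y x R5 by blast
    then have "x \<otimes> (y \<otimes> inv x \<otimes> inv y) \<in> R3" using x by simp
    then have c3: "?c \<in> R3" using xc yc by (simp add: m_assoc)
    have "?c = \<one>" using c3 c5 int by blast
    then have "x \<otimes> y \<otimes> inv x \<otimes> inv y \<otimes> y \<otimes> x = y \<otimes> x" using xc yc by simp
    then show "x \<otimes> y = y \<otimes> x" using xc yc by (simp add: m_assoc)
  qed
  have sub: "subgroup (R3 <#> R5) G" using prod_sub[OF R3(1) R5(1)] n5 R3 by blast
  have "card (R3 <#> R5) = 15" using prod_card[OF fin R3(1) R5(1) int] R3 R5 by simp
  moreover have "R3 <#> R5 \<subseteq> S" using R3 R5 S subgroup.m_closed unfolding set_mult_def by fastforce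
  ultimately have eq: "R3 <#> R5 = S" using sub_eq_card[OF fin S(1)] S by simp
  have "\<forall>u\<in>R3 <#> R5. \<forall>v\<in>R3 <#> R5. u \<otimes> v = v \<otimes> u"
    by (rule prod_comm) (use R3 R5 prime_sub_comm[OF fin] cross subgroup.subset[OF R3(1)] subgroup.subset[OF R5(1)] in auto)
  then show ?thesis using eq by simp
qed

end

context comm_group begin

lemma sqf_cyclic:
  assumes fin: "finite (carrier G)" and sq: "sqf (order G)"
  shows "cyclic_group G"
proof -
  have ne: "ord ` carrier G \<noteq> {}" by auto
  have fo: "finite (ord ` carrier G)" using fin by simp
  define m where "m = Max (ord ` carrier G)"
  obtain g where g: "g \<in> carrier G" "ord g = m" using Max_in[OF fo ne] m_def by auto
  have mx: "ord x \<le> ord g" if "x \<in> carrier G" for x using Max_ge[OF fo] that g m_def by auto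
  have ogpos: "ord g \<ge> 1" using ord_ge_1[OF fin g(1)] .
  have all: "\<forall>q. Factorial_Ring.prime q \<and> q dvd order G \<longrightarrow> q dvd ord g"
  proof (intro allI impI)
    fix q assume q: "Factorial_Ring.prime q \<and> q dvd order G"
    show "q dvd ord g"
    proof (rule ccontr)
      assume nd: "\<not> q dvd ord g"
      obtain Q where Q: "subgroup Q G" "card Q = q" using exists_prime_sub[OF fin] q by blast
      have "card Q \<ge> 2" using Q q prime_ge_2_nat by blast
      then have "card (Q - {\<one>}) > 0" using finite_sub[OF fin Q(1)] subgroup.one_closed[OF Q(1)]
        by (simp add: card_Diff_singleton)
      then obtain y where y: "y \<in> Q" "y \<noteq> \<one>" by (metis Diff_iff card_gt_0_iff ex_in_conv singletonI)
      have oy: "ord y = q" using prime_sub_gen(2)[OF fin Q(1) _ y] Q q by simp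
      have yc: "y \<in> carrier G" using y Q subgroup.subset by blast
      have "coprime (ord g) (ord y)" using oy q nd prime_imp_coprime by (metis coprime_commute)
      then have "ord (g \<otimes> y) = ord g * q" using ord_mult_coprime[OF g(1) yc m_comm[OF g(1) yc]] oy by simp
      moreover have "ord g * q > ord g" using ogpos q prime_gt_1_nat by simp
      ultimately show False using mx[of "g \<otimes> y"] g yc by simp
    qed
  qed
  have "order G > 0" using fin order_gt_0_iff_finite by blast
  then have "order G dvd ord g" using sqf_primes_dvd[OF sq _ all] by simp
  moreover have "ord g dvd order G" using ord_dvd_group_order[OF g(1)] .
  ultimately have "ord g = order G" by (simp add: dvd_antisym)
  then have "card (generate G {g}) = card (carrier G)" using generate_pow_card[OF g(1)] unfolding order_def by simp
  then have "generate G {g} = carrier G"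
    using sub_eq_card[OF fin subgroup_self, of "generate G {g}"] generate_incl[of "{g}"] g(1) by blast
  then have "carrier G = {g [^] (k::int) | k. k \<in> UNIV}" using generate_pow[OF g(1)] by simp
  then have "carrier G = range (\<lambda>n::int. g [^] n)" by blast
  then show ?thesis using cyclic_group g(1) by blast
qed

end


lemma dv10: "(d::nat) dvd 10 \<Longrightarrow> d mod 3 = 1 \<Longrightarrow> d = 1 \<or> d = 10"
proof -
  assume h: "d dvd 10" "d mod 3 = 1"
  then have "d \<le> 10" by (simp add: dvd_imp_le)
  then have "d \<in> {0..<11}" by auto
  then show ?thesis using h by (simp add: atLeastLessThan_nat_numeral) (elim disjE; simp)
qed

lemma dv6: "(d::nat) dvd 6 \<Longrightarrow> d mod 5 = 1 \<Longrightarrow> d = 1 \<or> d = 6"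
proof -
  assume h: "d dvd 6" "d mod 5 = 1"
  then have "d \<le> 6" by (simp add: dvd_imp_le)
  then have "d \<in> {0..<7}" by auto
  then show ?thesis using h by (simp add: atLeastLessThan_nat_numeral) (elim disjE; simp)
qed

lemma sqf15: "sqf 15"
  unfolding sqf_def
proof (intro allI impI notI)
  fix q :: nat assume q: "Factorial_Ring.prime q" "q^2 dvd 15"
  then have "q^2 \<le> 15" by (simp add: dvd_imp_le)
  then have "q < 4"
  proof (rule contrapos_pp)
    assume "\<not> q < 4"
    then have "(4::nat)^2 \<le> q^2" by (intro power_mono) auto
    then show "\<not> q^2 \<le> 15" by simp
  qed
  then have "q \<in> {0..<4}" by auto
  then show False using q by (simp add: atLeastLessThan_nat_numeral) (elim disjE; simp)
qed

context group begin

lemma sylow_num: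
  assumes fin: "finite (carrier G)" and q: "Factorial_Ring.prime q" "\<not> q^2 dvd order G"
    and Q: "subgroup Q G" "card Q = q"
  shows "card {H. subgroup H G \<and> card H = q} dvd (order G div q)"
    and "card {H. subgroup H G \<and> card H = q} mod q = 1"
    and "card {H. subgroup H G \<and> card H = q} * card (normalizer G Q) = order G"
proof -
  have m: "card {H. subgroup H G \<and> card H = q} * card (normalizer G Q) = order G"
    using sylow_main(2)[OF fin q Q] .
  then show "card {H. subgroup H G \<and> card H = q} * card (normalizer G Q) = order G" .
  obtain k where k: "card (normalizer G Q) = q * k" using q_dvd_normalizer[OF fin Q(1)] Q by auto
  have "order G = q * (card {H. subgroup H G \<and> card H = q} * k)"
    using m k by (simp add: algebra_simps)
  then have "order G div q = card {H. subgroup H G \<and> card H = q} * k"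
    using q prime_gt_0_nat by simp
  then show "card {H. subgroup H G \<and> card H = q} dvd (order G div q)" by simp
  show "card {H. subgroup H G \<and> card H = q} mod q = 1" using sylow_main(3)[OF fin q Q] .
qed

lemma finite_mod:
  assumes fin: "finite (carrier G)" shows "finite (carrier (G Mod M))"
  unfolding FactGroup_def RCOSETS_def using fin by simp

lemma order30:
  assumes fin: "finite (carrier G)" and o: "order G = 30"
  shows "\<exists>c\<in>carrier G. derived G (carrier G) \<subseteq> range (\<lambda>i::int. c [^] i)"
proof -
  have p3: "Factorial_Ring.prime (3::nat)" and p5: "Factorial_Ring.prime (5::nat)" by simp_all
  have nd3: "\<not> (3::nat)^2 dvd order G" and nd5: "\<not> (5::nat)^2 dvd order G" using o by simp_all
  obtain Q3 where Q3: "subgroup Q3 G" "card Q3 = 3" using exists_prime_sub[OF fin p3] o by auto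
  obtain Q5 where Q5: "subgroup Q5 G" "card Q5 = 5" using exists_prime_sub[OF fin p5] o by auto
  let ?n3 = "card {H. subgroup H G \<and> card H = 3}"
  let ?n5 = "card {H. subgroup H G \<and> card H = 5}"
  have "?n3 = 1 \<or> ?n3 = 10" using sylow_num(1,2)[OF fin p3 nd3 Q3] o dv10 by simp
  moreover have "?n5 = 1 \<or> ?n5 = 6" using sylow_num(1,2)[OF fin p5 nd5 Q5] o dv6 by simp
  moreover have "\<not> (?n3 = 10 \<and> ?n5 = 6)"
    using count_two[OF fin p3 p5] o by auto
  ultimately have "?n3 = 1 \<or> ?n5 = 1" by blast
  have "\<not> Q3 \<subseteq> Q5"
  proof
    assume "Q3 \<subseteq> Q5"
    then have "card Q3 dvd card Q5" using sub_card_dvd[OF fin Q5(1) Q3(1)] by blast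
    then show False using Q3 Q5 by simp
  qed
  then have int: "Q3 \<inter> Q5 = {\<one>}" using prime_sub_inter[OF fin Q3(1) _ Q5(1)] Q3 by simp
  then have int': "Q5 \<inter> Q3 = {\<one>}" by blast
  obtain M where M: "subgroup M G" "card M = 15"
  proof (cases "?n5 = 1")
    case True
    then have "\<forall>g\<in>carrier G. \<forall>h\<in>Q5. g \<otimes> h \<otimes> inv g \<in> Q5" using unique_normal[OF fin p5 nd5 Q5] by simp
    then have "subgroup (Q3 <#> Q5) G" using prod_sub[OF Q3(1) Q5(1)] Q3(1) subgroup.subset by blast
    moreover have "card (Q3 <#> Q5) = 15" using prod_card[OF fin Q3(1) Q5(1) int] Q3 Q5 by simp
    ultimately show ?thesis using that by blast
  next
    case False
    then have "?n3 = 1" using \<open>?n3 = 1 \<or> ?n5 = 1\<close> by blast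
    then have "\<forall>g\<in>carrier G. \<forall>h\<in>Q3. g \<otimes> h \<otimes> inv g \<in> Q3" using unique_normal[OF fin p3 nd3 Q3] by simp
    then have "subgroup (Q5 <#> Q3) G" using prod_sub[OF Q5(1) Q3(1)] Q5(1) subgroup.subset by blast
    moreover have "card (Q5 <#> Q3) = 15" using prod_card[OF fin Q5(1) Q3(1) int'] Q3 Q5 by simp
    ultimately show ?thesis using that by blast
  qed
  have nM: "M \<lhd> G" using index2_normal[OF fin M(1)] M o normal_inv_iff by simp
  interpret NM: normal M G by fact
  interpret QG: group "G Mod M" using NM.factorgroup_is_group .
  have "card (rcosets M) * card M = order G" using lagrange[OF M(1)] .
  then have "order (G Mod M) = 2" using M o unfolding order_def FactGroup_def by simp
  then have "comm_group (G Mod M)" using QG.prime_order_comm[OF finite_mod[OF fin]] by simp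
  then have dM: "derived G (carrier G) \<subseteq> M" using derived_minimal[OF nM] by blast
  let ?M = "G\<lparr>carrier := M\<rparr>"
  interpret GM: group ?M using M subgroup_imp_group by blast
  have "comm_group ?M" using GM.group_comm_groupI order15_comm[OF fin M] by simp
  then interpret CM: comm_group ?M .
  have "cyclic_group ?M"
    using CM.sqf_cyclic finite_sub[OF fin M(1)] sqf15 M unfolding order_def by simp
  then obtain c where c: "c \<in> M" "M = range (\<lambda>n::int. c [^]\<^bsub>?M\<^esub> n)"
    using GM.cyclic_group by auto
  have "M = range (\<lambda>n::int. c [^] n)" using c int_pow_consistent[OF M(1) c(1)] by simp
  then show ?thesis using dM c M(1) subgroup.subset by blast
qed

end


context group begin

lemma conj_hom:
  assumes g: "g \<in> carrier G"
  shows "group_hom G G (\<lambda>x. g \<otimes> x \<otimes> inv g)"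
proof -
  have "(\<lambda>x. g \<otimes> x \<otimes> inv g) \<in> hom G G"
  proof (rule homI)
    fix x assume "x \<in> carrier G" then show "g \<otimes> x \<otimes> inv g \<in> carrier G" using g by simp
  next
    fix x y assume "x \<in> carrier G" "y \<in> carrier G"
    then show "g \<otimes> (x \<otimes> y) \<otimes> inv g = g \<otimes> x \<otimes> inv g \<otimes> (g \<otimes> y \<otimes> inv g)"
      using g by (simp add: m_assoc)
  qed
  then show ?thesis unfolding group_hom_def group_hom_axioms_def using is_group by simp
qed

lemma conj_pow:
  assumes "g \<in> carrier G" "x \<in> carrier G"
  shows "g \<otimes> (x [^] (k::int)) \<otimes> inv g = (g \<otimes> x \<otimes> inv g) [^] k"
  using group_hom.hom_int_pow[OF conj_hom[OF assms(1)] assms(2)] .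

lemma cyc_conj_exp:
  assumes a: "a \<in> carrier G" and nP: "\<forall>g\<in>carrier G. g \<otimes> a \<otimes> inv g \<in> generate G {a}"
    and g: "g \<in> carrier G"
  shows "\<exists>r::int. \<forall>y\<in>generate G {a}. g \<otimes> y \<otimes> inv g = y [^] r"
proof -
  obtain r :: int where r: "g \<otimes> a \<otimes> inv g = a [^] r" using nP g generate_pow[OF a] by blast
  have "g \<otimes> y \<otimes> inv g = y [^] r" if y: "y \<in> generate G {a}" for y
  proof -
    obtain k :: int where k: "y = a [^] k" using y generate_pow[OF a] by blast
    have "g \<otimes> y \<otimes> inv g = (a [^] r) [^] k" using conj_pow[OF g a] k r by simp
    also have "\<dots> = a [^] (k * r)" using a by (simp add: int_pow_pow mult.commute)
    also have "\<dots> = y [^] r" using a k by (simp add: int_pow_pow)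
    finally show ?thesis .
  qed
  then show ?thesis by blast
qed

lemma comm_centralizes:
  assumes a: "a \<in> carrier G" and nP: "\<forall>g\<in>carrier G. g \<otimes> a \<otimes> inv g \<in> generate G {a}"
    and g: "g \<in> carrier G" and h: "h \<in> carrier G" and y: "y \<in> generate G {a}"
  shows "(g \<otimes> h \<otimes> inv g \<otimes> inv h) \<otimes> y = y \<otimes> (g \<otimes> h \<otimes> inv g \<otimes> inv h)"
proof -
  let ?P = "generate G {a}"
  have sP: "subgroup ?P G" using generate_is_subgroup a by simp
  have yc: "y \<in> carrier G" using y sP subgroup.subset by blast
  have pc: "\<And>z (k::int). z \<in> ?P \<Longrightarrow> z [^] k \<in> ?P" using sP subgroup_int_pow_closed by blast
  obtain r1 :: int where r1: "\<forall>y\<in>?P. g \<otimes> y \<otimes> inv g = y [^] r1" using cyc_conj_exp[OF a nP g] by blast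
  obtain r2 :: int where r2: "\<forall>y\<in>?P. h \<otimes> y \<otimes> inv h = y [^] r2" using cyc_conj_exp[OF a nP h] by blast
  obtain r3 :: int where r3: "\<forall>y\<in>?P. inv g \<otimes> y \<otimes> inv (inv g) = y [^] r3" using cyc_conj_exp[OF a nP] g by blast
  obtain r4 :: int where r4: "\<forall>y\<in>?P. inv h \<otimes> y \<otimes> inv (inv h) = y [^] r4" using cyc_conj_exp[OF a nP] h by blast
  let ?c = "g \<otimes> h \<otimes> inv g \<otimes> inv h"
  have cc: "?c \<in> carrier G" using g h by simp
  have e1: "?c \<otimes> y \<otimes> inv ?c =
      g \<otimes> (h \<otimes> (inv g \<otimes> (inv h \<otimes> y \<otimes> inv (inv h)) \<otimes> inv (inv g)) \<otimes> inv h) \<otimes> inv g"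
    using g h yc by (simp add: m_assoc inv_mult_group)
  have y4: "inv h \<otimes> y \<otimes> inv (inv h) = y [^] r4" using r4 y by blast
  have y43: "inv g \<otimes> (y [^] r4) \<otimes> inv (inv g) = (y [^] r4) [^] r3" using r3 pc[OF y] by blast
  have y432: "h \<otimes> ((y [^] r4) [^] r3) \<otimes> inv h = ((y [^] r4) [^] r3) [^] r2"
    using r2 pc[OF pc[OF y]] by blast
  have y4321: "g \<otimes> (((y [^] r4) [^] r3) [^] r2) \<otimes> inv g = (((y [^] r4) [^] r3) [^] r2) [^] r1"
    using r1 pc[OF pc[OF pc[OF y]]] by blast
  have "?c \<otimes> y \<otimes> inv ?c = (((y [^] r4) [^] r3) [^] r2) [^] r1"
    using e1 y4 y43 y432 y4321 by simp
  also have "\<dots> = y [^] ((r3 * r1) * (r4 * r2))" using yc by (simp add: int_pow_pow algebra_simps)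
  finally have e2: "?c \<otimes> y \<otimes> inv ?c = y [^] ((r3 * r1) * (r4 * r2))" .
  have "g \<otimes> (inv g \<otimes> y \<otimes> inv (inv g)) \<otimes> inv g = y" using g yc by (simp add: m_assoc)
  then have "y [^] (r3 * r1) = y" using r1 r3 y pc[OF y] yc by (simp add: int_pow_pow)
  moreover have "h \<otimes> (inv h \<otimes> y \<otimes> inv (inv h)) \<otimes> inv h = y" using h yc by (simp add: m_assoc)
  then have "y [^] (r4 * r2) = y" using r2 r4 y pc[OF y] yc by (simp add: int_pow_pow)
  ultimately have "y [^] ((r3 * r1) * (r4 * r2)) = y" using yc by (simp add: int_pow_pow[symmetric])
  then have "?c \<otimes> y \<otimes> inv ?c = y" using e2 by simp
  then show ?thesis using cc yc by (metis inv_closed inv_solve_right m_closed)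
qed

definition centr where "centr S = {x \<in> carrier G. \<forall>y\<in>S. x \<otimes> y = y \<otimes> x}"

lemma centr_sub:
  assumes "S \<subseteq> carrier G" shows "subgroup (centr S) G"
proof (rule subgroupI)
  show "centr S \<subseteq> carrier G" unfolding centr_def by blast
  have "\<one> \<in> centr S" unfolding centr_def using assms by auto
  then show "centr S \<noteq> {}" by blast
next
  fix x assume x: "x \<in> centr S"
  have xc: "x \<in> carrier G" using x unfolding centr_def by blast
  have "inv x \<otimes> y = y \<otimes> inv x" if y: "y \<in> S" for y
  proof -
    have yc: "y \<in> carrier G" using y assms by blast
    have "x \<otimes> y = y \<otimes> x" using x y unfolding centr_def by blast
    then have "inv x \<otimes> (x \<otimes> y) \<otimes> inv x = inv x \<otimes> (y \<otimes> x) \<otimes> inv x" by simp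
    then show ?thesis using xc yc by (simp add: m_assoc)
  qed
  then show "inv x \<in> centr S" using xc unfolding centr_def by simp
next
  fix x z assume x: "x \<in> centr S" and z: "z \<in> centr S"
  have c: "x \<in> carrier G" "z \<in> carrier G" using x z unfolding centr_def by auto
  have "x \<otimes> z \<otimes> y = y \<otimes> (x \<otimes> z)" if y: "y \<in> S" for y
  proof -
    have yc: "y \<in> carrier G" using y assms by blast
    have "x \<otimes> z \<otimes> y = x \<otimes> (z \<otimes> y)" using c yc by (simp add: m_assoc)
    also have "\<dots> = x \<otimes> (y \<otimes> z)" using z y unfolding centr_def by simp
    also have "\<dots> = (x \<otimes> y) \<otimes> z" using c yc by (simp add: m_assoc)
    also have "\<dots> = (y \<otimes> x) \<otimes> z" using x y unfolding centr_def by simp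
    finally show ?thesis using c yc by (simp add: m_assoc)
  qed
  then show "x \<otimes> z \<in> centr S" using c unfolding centr_def by simp
qed

lemma derived_centr:
  assumes a: "a \<in> carrier G" and nP: "\<forall>g\<in>carrier G. g \<otimes> a \<otimes> inv g \<in> generate G {a}"
  shows "derived G (carrier G) \<subseteq> centr (generate G {a})"
proof -
  have sP: "generate G {a} \<subseteq> carrier G" using generate_is_subgroup a subgroup.subset by auto
  show ?thesis unfolding derived_def
  proof (rule generate_subgroup_incl[OF _ centr_sub[OF sP]])
    show "derived_set G (carrier G) \<subseteq> centr (generate G {a})"
    proof
      fix x assume "x \<in> derived_set G (carrier G)"
      then obtain g h where gh: "g \<in> carrier G" "h \<in> carrier G" "x = g \<otimes> h \<otimes> inv g \<otimes> inv h" by blast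
      then show "x \<in> centr (generate G {a})"
        using comm_centralizes[OF a nP gh(1,2)] unfolding centr_def by simp
    qed
  qed
qed

end


context group begin

lemma lemmaQ:
  assumes fin: "finite (carrier G)" and a: "a \<in> carrier G" and nP: "generate G {a} \<lhd> G"
    and c: "\<exists>c\<in>carrier (G Mod (generate G {a})).
      derived (G Mod (generate G {a})) (carrier (G Mod (generate G {a}))) \<subseteq> range (\<lambda>i::int. c [^]\<^bsub>G Mod (generate G {a})\<^esub> i)"
  shows "\<forall>x\<in>derived G (carrier G). \<forall>y\<in>derived G (carrier G). x \<otimes> y = y \<otimes> x"
proof -
  let ?P = "generate G {a}"
  let ?Q = "G Mod ?P"
  interpret NP: normal ?P G by fact
  interpret Q: group ?Q using NP.factorgroup_is_group .
  interpret h: group_hom G ?Q "\<lambda>x. ?P #> x"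
    unfolding group_hom_def group_hom_axioms_def using is_group Q.is_group NP.r_coset_hom_Mod by simp
  have sP: "subgroup ?P G" using NP.subgroup_axioms .
  have Pc: "?P \<subseteq> carrier G" using sP subgroup.subset by blast
  have nPe: "\<forall>g\<in>carrier G. g \<otimes> a \<otimes> inv g \<in> ?P"
    using nP normal_inv_iff generate.incl[of a "{a}" G] by blast
  have dC: "derived G (carrier G) \<subseteq> centr ?P" using derived_centr[OF a nPe] .
  have PC: "?P \<subseteq> centr ?P"
  proof
    fix x assume x: "x \<in> ?P"
    obtain i :: int where i: "x = a [^] i" using x generate_pow[OF a] by blast
    have "x \<otimes> y = y \<otimes> x" if y: "y \<in> ?P" for y
    proof -
      obtain j :: int where j: "y = a [^] j" using y generate_pow[OF a] by blast
      show ?thesis using i j a by (simp add: int_pow_mult[symmetric] add.commute)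
    qed
    then show "x \<in> centr ?P" using x Pc unfolding centr_def by blast
  qed
  have sC: "subgroup (centr ?P) G" using centr_sub[OF Pc] .
  obtain c where c: "c \<in> carrier ?Q" "derived ?Q (carrier ?Q) \<subseteq> range (\<lambda>i::int. c [^]\<^bsub>?Q\<^esub> i)"
    using assms(4) by blast
  obtain x0 where x0: "x0 \<in> carrier G" "c = ?P #> x0" using c(1) unfolding carrier_FactGroup by blast
  have img: "(\<lambda>x. ?P #> x) ` carrier G = carrier ?Q" by (rule carrier_FactGroup[symmetric])
  have dimg: "derived ?Q (carrier ?Q) = (\<lambda>x. ?P #> x) ` derived G (carrier G)"
    using h.derived_img[of "carrier G"] img by simp
  have rep: "\<exists>p\<in>?P. \<exists>i::int. x = p \<otimes> x0 [^] i \<and> x0 [^] i \<in> centr ?P" if x: "x \<in> derived G (carrier G)" for x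
  proof -
    have xc: "x \<in> carrier G" using x derived_in_carrier by blast
    have "?P #> x \<in> derived ?Q (carrier ?Q)" using dimg x by blast
    then obtain i :: int where i: "?P #> x = c [^]\<^bsub>?Q\<^esub> i" using c(2) by blast
    also have "\<dots> = ?P #> (x0 [^] i)" using h.hom_int_pow[OF x0(1), of i] x0(2) by simp
    finally have "?P #> x = ?P #> (x0 [^] i)" .
    then have "x \<in> ?P #> (x0 [^] i)" using rcos_self[OF xc sP] by simp
    then obtain p where p: "p \<in> ?P" "x = p \<otimes> x0 [^] i" unfolding r_coset_def by blast
    have pc: "p \<in> carrier G" using p Pc by blast
    have ui: "x0 [^] i = inv p \<otimes> x" using p pc x0 by simp
    have "inv p \<in> centr ?P" using PC p sC subgroup.m_inv_closed by blast
    moreover have "x \<in> centr ?P" using dC x by blast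
    ultimately have "x0 [^] i \<in> centr ?P" using ui sC subgroup.m_closed by fastforce
    then show ?thesis using p by blast
  qed
  show ?thesis
  proof (intro ballI)
    fix x y assume x: "x \<in> derived G (carrier G)" and y: "y \<in> derived G (carrier G)"
    obtain p i where p: "p \<in> ?P" "x = p \<otimes> x0 [^] (i::int)" "x0 [^] i \<in> centr ?P" using rep[OF x] by blast
    obtain p' j where p': "p' \<in> ?P" "y = p' \<otimes> x0 [^] (j::int)" "x0 [^] j \<in> centr ?P" using rep[OF y] by blast
    let ?u = "x0 [^] i" and ?v = "x0 [^] j"
    have cc: "p \<in> carrier G" "p' \<in> carrier G" "?u \<in> carrier G" "?v \<in> carrier G" using p p' Pc x0 by auto
    have c1: "?u \<otimes> p' = p' \<otimes> ?u" using p(3) p'(1) unfolding centr_def by blast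
    have c2: "?v \<otimes> p = p \<otimes> ?v" using p'(3) p(1) unfolding centr_def by blast
    have c3: "p \<otimes> p' = p' \<otimes> p" using PC p(1) p'(1) unfolding centr_def by blast
    have c4: "?u \<otimes> ?v = ?v \<otimes> ?u" using x0 by (simp add: int_pow_mult[symmetric] add.commute)
    have "x \<otimes> y = p \<otimes> (?u \<otimes> p') \<otimes> ?v" using p p' cc by (simp add: m_assoc)
    also have "\<dots> = (p \<otimes> p') \<otimes> (?u \<otimes> ?v)" using c1 cc by (simp add: m_assoc)
    also have "\<dots> = (p' \<otimes> p) \<otimes> (?v \<otimes> ?u)" using c3 c4 by simp
    also have "\<dots> = p' \<otimes> (?v \<otimes> p) \<otimes> ?u" using c2 cc by (simp add: m_assoc)
    also have "\<dots> = y \<otimes> x" using p p' cc by (simp add: m_assoc)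
    finally show "x \<otimes> y = y \<otimes> x" .
  qed
qed

end


lemma not_prime9: "\<not> Factorial_Ring.prime (9::nat)"
  using prime_product[of "3::nat" 3] by simp

lemma not_prime14: "\<not> Factorial_Ring.prime (14::nat)" by simp

lemma dv30: "(d::nat) dvd 30 \<Longrightarrow> d \<in> {1,2,3,5,6,10,15,30}"
proof -
  assume h: "d dvd 30"
  then have "d \<le> 30" by (simp add: dvd_imp_le)
  then have "d \<in> {0..<31}" by auto
  then show ?thesis using h by (simp add: atLeastLessThan_nat_numeral) (elim disjE; simp)
qed

lemma np_cases:
  assumes "(n::nat) dvd 30" "n mod p = 1" "Factorial_Ring.prime p" "p \<ge> 7"
  shows "n = 1 \<or> (p = 7 \<and> n = 15) \<or> (p = 29 \<and> n = 30)"
proof (cases "n < p")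
  case True then show ?thesis using assms by simp
next
  case False
  then have "p \<le> 30" using dv30[OF assms(1)] by auto
  then have "p \<in> {7..<31}" using assms(4) by auto
  then show ?thesis using dv30[OF assms(1)] assms(2,3) not_prime9 not_prime14
    by (simp add: atLeastLessThan_nat_numeral) (elim disjE; simp)
qed

lemma dv42: "(d::nat) dvd 42 \<Longrightarrow> d mod 5 = 1 \<Longrightarrow> d = 1 \<or> d = 6 \<or> d = 21"
proof -
  assume h: "d dvd 42" "d mod 5 = 1"
  then have "d \<le> 42" by (simp add: dvd_imp_le)
  then have "d \<in> {0..<43}" by auto
  then show ?thesis using h by (simp add: atLeastLessThan_nat_numeral) (elim disjE; simp)
qed

lemma dv70: "(d::nat) dvd 70 \<Longrightarrow> d mod 3 = 1 \<Longrightarrow> d = 1 \<or> d = 7 \<or> d = 10 \<or> d = 70"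
proof -
  assume h: "d dvd 70" "d mod 3 = 1"
  then have "d \<le> 70" by (simp add: dvd_imp_le)
  then have "d \<in> {0..<71}" by auto
  then show ?thesis using h by (simp add: atLeastLessThan_nat_numeral) (elim disjE; simp)
qed

lemma dv174: "(d::nat) dvd 174 \<Longrightarrow> d mod 5 = 1 \<Longrightarrow> d = 1 \<or> d = 6"
proof -
  assume h: "d dvd 174" "d mod 5 = 1"
  then have "d \<le> 174" by (simp add: dvd_imp_le)
  then have "d \<in> {0..<175}" by auto
  then show ?thesis using h by (simp add: atLeastLessThan_nat_numeral) (elim disjE; simp)
qed

lemma not_prime15: "\<not> Factorial_Ring.prime (15::nat)"
  using prime_product[of "3::nat" 5] by simp

lemma sq_aux:
  assumes "Factorial_Ring.prime (q::nat)" "q * q dvd q * m * p" "\<not> q dvd m" "Factorial_Ring.prime p" "q \<noteq> p"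
  shows False
proof -
  have "q dvd m * p" using assms(1,2) prime_gt_0_nat by (simp add: mult.assoc)
  then have "q dvd p" using assms(1,3) prime_dvd_mult_iff by blast
  then show False using assms(1,4,5) prime_nat_iff by (metis prime_gt_1_nat less_irrefl)
qed

lemma sqf30p:
  assumes p: "Factorial_Ring.prime p" "p \<ge> 7"
  shows "sqf (30 * p)"
  unfolding sqf_def
proof (intro allI impI notI)
  fix q :: nat assume q: "Factorial_Ring.prime q" "q^2 dvd 30 * p"
  have q2: "q * q dvd 30 * p" using q by (simp add: power2_eq_square)
  have "q dvd 30 * p" using q2 dvd_mult_left by blast
  then have "q dvd 30 \<or> q dvd p" using q(1) prime_dvd_mult_iff by blast
  then show False
  proof
    assume "q dvd 30"
    then have "q \<in> {1,2,3,5,6,10,15,30}" using dv30 by blast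
    then have "q = 2 \<or> q = 3 \<or> q = 5" using q(1) not_prime15 by (elim insertE; simp)
    moreover have "q \<noteq> p" using calculation p by auto
    ultimately have "q = 2 \<or> q = 3 \<or> q = 5" by blast
    show False using \<open>q = 2 \<or> q = 3 \<or> q = 5\<close>
    proof (elim disjE)
      assume "q = 2"
      then have "q * q dvd q * 15 * p" "\<not> q dvd 15" using q2 by simp_all
      then show False using sq_aux[OF q(1) _ _ p(1)] \<open>q \<noteq> p\<close> by blast
    next
      assume "q = 3"
      then have "q * q dvd q * 10 * p" "\<not> q dvd 10" using q2 by simp_all
      then show False using sq_aux[OF q(1) _ _ p(1)] \<open>q \<noteq> p\<close> by blast
    next
      assume "q = 5"
      then have "q * q dvd q * 6 * p" "\<not> q dvd 6" using q2 by simp_all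
      then show False using sq_aux[OF q(1) _ _ p(1)] \<open>q \<noteq> p\<close> by blast
    qed
  next
    assume "q dvd p"
    then have "q = p" using p q prime_nat_iff by (metis prime_gt_1_nat less_irrefl)
    then have "p * p dvd 30 * p" using q2 by simp
    moreover have "0 < p" using p prime_gt_0_nat by blast
    ultimately have "p dvd 30" by simp
    then have "p \<in> {1,2,3,5,6,10,15,30}" using dv30 by blast
    then show False using p not_prime15 by (elim insertE; simp)
  qed
qed



context group begin

lemma norm_contra:
  assumes fin: "finite (carrier G)" and Q: "subgroup Q G" "card Q = s"
    and R: "subgroup R G" "card R = r"
    and pr: "Factorial_Ring.prime r" "Factorial_Ring.prime s" "r \<noteq> s" "s mod r \<noteq> 1"
    and RN: "R \<subseteq> normalizer G Q"
  shows "r * s \<le> card (normalizer G R)"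
proof -
  have Qc: "Q \<subseteq> carrier G" using Q subgroup.subset by blast
  have nq: "\<forall>h\<in>R. \<forall>k\<in>Q. h \<otimes> k \<otimes> inv h \<in> Q" using normalizer_elem[OF Qc] RN by blast
  have S: "subgroup (R <#> Q) G" using prod_sub[OF R(1) Q(1) nq] .
  have "\<not> R \<subseteq> Q"
  proof
    assume "R \<subseteq> Q"
    then have "r dvd s" using sub_card_dvd[OF fin Q(1) R(1)] Q R by simp
    then show False using pr by (metis prime_nat_iff prime_gt_1_nat less_irrefl)
  qed
  then have int: "R \<inter> Q = {\<one>}" using prime_sub_inter[OF fin R(1) _ Q(1)] R pr by simp
  have cS: "card (R <#> Q) = r * s" using prod_card[OF fin R(1) Q(1) int] Q R by simp
  have RS: "R \<subseteq> R <#> Q"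
  proof
    fix x assume x: "x \<in> R"
    then have "x = x \<otimes> \<one>" using R subgroup.subset by (metis r_one subsetD)
    then show "x \<in> R <#> Q" using x subgroup.one_closed[OF Q(1)] unfolding set_mult_def by blast
  qed
  have "\<forall>x\<in>R <#> Q. \<forall>y\<in>R. x \<otimes> y \<otimes> inv x \<in> R"
    using pq_norm[OF fin S cS pr R(1) RS R(2)] .
  then have "R <#> Q \<subseteq> normalizer G R"
    using normalizer_I[OF fin subgroup.subset[OF R(1)]] subgroup.subset[OF S] by blast
  moreover have "finite (normalizer G R)"
    using finite_sub[OF fin normalizer_sub[OF subgroup.subset[OF R(1)]]] .
  ultimately show ?thesis using cS card_mono by metis
qed

lemma cauchy_norm:
  assumes fin: "finite (carrier G)" and Q: "subgroup Q G" and r: "Factorial_Ring.prime r"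
    and d: "r dvd card (normalizer G Q)"
  shows "\<exists>R. subgroup R G \<and> card R = r \<and> R \<subseteq> normalizer G Q"
  using exists_prime_sub_in[OF fin normalizer_sub[OF subgroup.subset[OF Q]] r d] by blast

lemma normal_p:
  assumes fin: "finite (carrier G)" and p: "Factorial_Ring.prime p" "p \<ge> 7" and o: "order G = 30 * p"
  shows "\<exists>P. subgroup P G \<and> card P = p \<and> (\<forall>g\<in>carrier G. \<forall>h\<in>P. g \<otimes> h \<otimes> inv g \<in> P)"
proof -
  have sq: "sqf (order G)" using sqf30p[OF p] o by simp
  have nd: "\<not> q^2 dvd order G" if "Factorial_Ring.prime q" for q using sq that unfolding sqf_def by blast
  have p3: "Factorial_Ring.prime (3::nat)" and p5: "Factorial_Ring.prime (5::nat)" and p7: "Factorial_Ring.prime (7::nat)" by simp_all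
  have p29: "Factorial_Ring.prime (29::nat)" unfolding prime_nat_iff' by (simp add: atLeastLessThan_nat_numeral)
  obtain P where P: "subgroup P G" "card P = p" using exists_prime_sub[OF fin p(1)] o by auto
  let ?X = "\<lambda>q. {H. subgroup H G \<and> card H = q}"
  have pp: "p > 0" using p prime_gt_0_nat by blast
  have "card (?X p) dvd 30" "card (?X p) mod p = 1"
    using sylow_num(1,2)[OF fin p(1) nd[OF p(1)] P] o pp by auto
  then have cases: "card (?X p) = 1 \<or> (p = 7 \<and> card (?X p) = 15) \<or> (p = 29 \<and> card (?X p) = 30)"
    using np_cases p by blast
  have Np: "card (?X p) * card (normalizer G P') = order G" if "subgroup P' G" "card P' = p" for P'
    using sylow_num(3)[OF fin p(1) nd[OF p(1)] that] by simp
  show ?thesis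
  proof (cases "card (?X p) = 1")
    case True
    then show ?thesis using unique_normal[OF fin p(1) nd[OF p(1)] P] P by blast
  next
    case False
    have False
    proof (cases "p = 7")
      case p7e: True
      then have n7: "card (?X 7) = 15" using cases False by auto
      have N7: "card (normalizer G P') = 14" if "subgroup P' G" "card P' = 7" for P'
        using Np[of P'] that n7 o p7e by simp
      have o210: "order G = 210" using o p7e by simp
      obtain Q5 where Q5: "subgroup Q5 G" "card Q5 = 5" using exists_prime_sub[OF fin p5] o210 by auto
      have "card (?X 5) dvd 42" "card (?X 5) mod 5 = 1" using sylow_num(1,2)[OF fin p5 nd[OF p5] Q5] o210 by auto
      then have n5: "card (?X 5) = 1 \<or> card (?X 5) = 6 \<or> card (?X 5) = 21" using dv42 by blast
      have N5: "card (?X 5) * card (normalizer G Q5') = 210" if "subgroup Q5' G" "card Q5' = 5" for Q5'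
        using sylow_num(3)[OF fin p5 nd[OF p5] that] o210 by simp
      show False
      proof (cases "card (?X 5) = 21")
        case False
        then have "card (?X 5) = 1 \<or> card (?X 5) = 6" using n5 by blast
        then have "card (normalizer G Q5) = 210 \<or> card (normalizer G Q5) = 35" using N5[OF Q5] by auto
        then have "7 dvd card (normalizer G Q5)" by auto
        then obtain R where R: "subgroup R G" "card R = 7" "R \<subseteq> normalizer G Q5"
          using cauchy_norm[OF fin Q5(1) p7] by blast
        have "7 * 5 \<le> card (normalizer G R)" using norm_contra[OF fin Q5 R(1,2) p7 p5 _ _ R(3)] by simp
        then show False using N7[OF R(1,2)] by simp
      next
        case n21: True
        obtain Q3 where Q3: "subgroup Q3 G" "card Q3 = 3" using exists_prime_sub[OF fin p3] o210 by auto
        have "card (?X 3) dvd 70" "card (?X 3) mod 3 = 1" using sylow_num(1,2)[OF fin p3 nd[OF p3] Q3] o210 by auto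
        then have n3: "card (?X 3) = 1 \<or> card (?X 3) = 7 \<or> card (?X 3) = 10 \<or> card (?X 3) = 70" using dv70 by blast
        have N3: "card (?X 3) * card (normalizer G Q3) = 210"
          using sylow_num(3)[OF fin p3 nd[OF p3] Q3] o210 by simp
        have c2: "card (?X 5) * (5 - 1) + card (?X 3) * (3 - 1) \<le> order G - 1"
          using count_two[OF fin p5 p3] by simp
        show False
        proof (cases "card (?X 3) = 10")
          case True
          then have "card (normalizer G Q3) = 21" using N3 by simp
          then have "7 dvd card (normalizer G Q3)" by simp
          then obtain R where R: "subgroup R G" "card R = 7" "R \<subseteq> normalizer G Q3"
            using cauchy_norm[OF fin Q3(1) p7] by blast
          have "7 * 3 \<le> card (normalizer G R)" using norm_contra[OF fin Q3 R(1,2) p7 p3 _ _ R(3)] by simp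
          then show False using N7[OF R(1,2)] by simp
        next
          case False
          then have "card (?X 3) = 1 \<or> card (?X 3) = 7" using n3 c2 n21 o210 by auto
          then have "card (normalizer G Q3) = 210 \<or> card (normalizer G Q3) = 30" using N3 by auto
          then have "5 dvd card (normalizer G Q3)" by auto
          then obtain R where R: "subgroup R G" "card R = 5" "R \<subseteq> normalizer G Q3"
            using cauchy_norm[OF fin Q3(1) p5] by blast
          have "5 * 3 \<le> card (normalizer G R)" using norm_contra[OF fin Q3 R(1,2) p5 p3 _ _ R(3)] by simp
          moreover have "card (normalizer G R) = 10" using N5[OF R(1,2)] n21 by simp
          ultimately show False by simp
        qed
      qed
    next
      case False
      then have p29e: "p = 29" and n29: "card (?X 29) = 30" using cases \<open>card (?X p) \<noteq> 1\<close> by auto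
      have N29: "card (normalizer G P') = 29" if "subgroup P' G" "card P' = 29" for P'
        using Np[of P'] that n29 o p29e by simp
      have o870: "order G = 870" using o p29e by simp
      obtain Q5 where Q5: "subgroup Q5 G" "card Q5 = 5" using exists_prime_sub[OF fin p5] o870 by auto
      have "card (?X 5) dvd 174" "card (?X 5) mod 5 = 1" using sylow_num(1,2)[OF fin p5 nd[OF p5] Q5] o870 by auto
      then have n5: "card (?X 5) = 1 \<or> card (?X 5) = 6" using dv174 by blast
      have "card (?X 5) * card (normalizer G Q5) = 870"
        using sylow_num(3)[OF fin p5 nd[OF p5] Q5] o870 by simp
      then have "card (normalizer G Q5) = 870 \<or> card (normalizer G Q5) = 145" using n5 by auto
      then have "29 dvd card (normalizer G Q5)" by auto
      then obtain R where R: "subgroup R G" "card R = 29" "R \<subseteq> normalizer G Q5"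
        using cauchy_norm[OF fin Q5(1) p29] by blast
      have "29 * 5 \<le> card (normalizer G R)" using norm_contra[OF fin Q5 R(1,2) p29 p5 _ _ R(3)] by simp
      then show False using N29[OF R(1,2)] by simp
    qed
    then show ?thesis by blast
  qed
qed

end


lemma sqf_coprime:
  assumes "sqf (n * m)" shows "coprime n m"
proof (rule ccontr)
  assume nc: "\<not> coprime n m"
  then have "gcd n m \<noteq> 1" by (simp add: coprime_iff_gcd_eq_1)
  then obtain q where q: "Factorial_Ring.prime q" "q dvd gcd n m" using prime_factor_nat by blast
  then have "q dvd n" "q dvd m" by auto
  then have "q^2 dvd n * m" by (simp add: power2_eq_square mult_dvd_mono)
  then show False using assms q unfolding sqf_def by blast
qed

context group begin

lemma nat_pow_in_sub:
  assumes "subgroup H G" "x \<in> H" shows "x [^] (n::nat) \<in> H"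
  using subgroup_int_pow_closed[OF assms, of "int n"] assms subgroup.subset by (simp add: int_pow_int)

lemma conj_comm_pow:
  assumes x: "x \<in> carrier G" and y: "y \<in> carrier G" and c: "x \<otimes> y = y \<otimes> x"
  shows "x [^] (i::int) \<otimes> y = y \<otimes> x [^] i"
proof -
  have "y \<otimes> x \<otimes> inv y = x" using c x y by (metis inv_solve_right m_closed inv_closed)
  then have "y \<otimes> x [^] i \<otimes> inv y = x [^] i" using conj_pow[OF y x, of i] by simp
  then show ?thesis using x y by (metis inv_closed inv_solve_right int_pow_closed m_closed)
qed

lemma complement_exists:
  assumes fin: "finite (carrier G)" and nN: "N \<lhd> G" and cm: "comm_group (G Mod N)"
    and sq: "sqf (order G)"
  shows "\<exists>b\<in>carrier G. ord b > 0 \<and> generate G {b} \<inter> N = {\<one>} \<and> generate G {b} <#> N = carrier G"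
proof -
  interpret NN: normal N G by fact
  interpret Q: comm_group "G Mod N" by fact
  interpret h: group_hom G "G Mod N" "\<lambda>x. N #> x"
    unfolding group_hom_def group_hom_axioms_def using is_group Q.is_group NN.r_coset_hom_Mod by simp
  have sN: "subgroup N G" using NN.subgroup_axioms .
  let ?n = "order (G Mod N)"
  let ?m = "card N"
  have nm: "?n * ?m = order G" using lagrange[OF sN] unfolding order_def FactGroup_def by simp
  have finQ: "finite (carrier (G Mod N))" using finite_mod[OF fin] .
  have "sqf ?n" using sqf_dvd[OF sq] nm by (metis dvd_triv_left)
  then have "cyclic_group (G Mod N)" using Q.sqf_cyclic[OF finQ] by simp
  then obtain c where c: "c \<in> carrier (G Mod N)" "carrier (G Mod N) = range (\<lambda>i::int. c [^]\<^bsub>G Mod N\<^esub> i)"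
    using Q.cyclic_group by blast
  have "generate (G Mod N) {c} = carrier (G Mod N)" using Q.generate_pow[OF c(1)] c(2) by auto
  then have oc: "Q.ord c = ?n" using Q.generate_pow_card[OF c(1)] unfolding order_def by simp
  obtain g0 where g0: "g0 \<in> carrier G" "c = N #> g0" using c(1) unfolding carrier_FactGroup by blast
  have "c [^]\<^bsub>G Mod N\<^esub> (ord g0) = N #> (g0 [^] ord g0)" using h.hom_nat_pow[OF g0(1)] g0(2) by simp
  also have "\<dots> = \<one>\<^bsub>G Mod N\<^esub>" using g0 by simp
  finally have "?n dvd ord g0" using Q.pow_eq_id[OF c(1)] oc by simp
  then obtain t where t: "ord g0 = ?n * t" by blast
  have og: "ord g0 > 0" using ord_ge_1[OF fin g0(1)] by simp
  then have tpos: "t \<noteq> 0" using t by auto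
  define b where "b = g0 [^] t"
  have bc: "b \<in> carrier G" using g0 b_def by simp
  have ob: "ord b = ?n" unfolding b_def using ord_pow[OF g0(1), of t] t tpos og by simp
  have npos: "?n > 0" using og t by auto
  have cop: "coprime ?n ?m" using sqf_coprime sq nm by simp
  have sB: "subgroup (generate G {b}) G" and cB: "card (generate G {b}) = ?n"
    using ord_prime_sub[OF fin bc] ob by auto
  have int: "generate G {b} \<inter> N = {\<one>}"
  proof
    show "generate G {b} \<inter> N \<subseteq> {\<one>}"
    proof
      fix x assume x: "x \<in> generate G {b} \<inter> N"
      have "ord x dvd ?n" using ord_in_sub_dvd[OF fin sB] x cB by auto
      moreover have "ord x dvd ?m" using ord_in_sub_dvd[OF fin sN] x by auto
      ultimately have "ord x = 1" using cop by (metis coprime_common_divisor_nat)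
      then show "x \<in> {\<one>}" using ord_eq_1 x sN subgroup.subset by blast
    qed
    show "{\<one>} \<subseteq> generate G {b} \<inter> N" using sB sN subgroup.one_closed by blast
  qed
  have nc: "\<forall>h\<in>generate G {b}. \<forall>k\<in>N. h \<otimes> k \<otimes> inv h \<in> N"
    using nN normal_inv_iff sB subgroup.subset by blast
  have sBN: "subgroup (generate G {b} <#> N) G" using prod_sub[OF sB sN nc] .
  have "card (generate G {b} <#> N) = order G" using prod_card[OF fin sB sN int] cB nm by simp
  then have "generate G {b} <#> N = carrier G"
    using sub_eq_card[OF fin subgroup_self] subgroup.subset[OF sBN] unfolding order_def by blast
  then show ?thesis using bc ob npos int by (intro bexI[of _ b]) auto
qed

end


context group begin

lemma center_pow:
  assumes z: "z \<in> group_center G" shows "z [^] (i::int) \<in> group_center G"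
proof -
  have zc: "z \<in> carrier G" using z unfolding group_center_def by blast
  have "z [^] i \<otimes> g = g \<otimes> z [^] i" if g: "g \<in> carrier G" for g
    using conj_comm_pow[OF zc g] z g unfolding group_center_def by blast
  then show ?thesis using zc unfolding group_center_def by simp
qed

lemma center_npow:
  assumes z: "z \<in> group_center G" shows "z [^] (n::nat) \<in> group_center G"
  using center_pow[OF z, of "int n"] z unfolding group_center_def by (simp add: int_pow_int)

lemma comm_id1:
  assumes "x \<in> carrier G" "y \<in> carrier G" "z \<in> carrier G"
  shows "x \<otimes> y \<otimes> z \<otimes> inv (x \<otimes> y) \<otimes> inv z =
    x \<otimes> (y \<otimes> z \<otimes> inv y \<otimes> inv z) \<otimes> inv x \<otimes> (x \<otimes> z \<otimes> inv x \<otimes> inv z)"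
  using assms by (simp add: m_assoc inv_mult_group)

lemma comm_id2:
  assumes "x \<in> carrier G" "y \<in> carrier G" "z \<in> carrier G"
  shows "x \<otimes> (y \<otimes> z) \<otimes> inv x \<otimes> inv (y \<otimes> z) =
    (x \<otimes> y \<otimes> inv x \<otimes> inv y) \<otimes> (y \<otimes> (x \<otimes> z \<otimes> inv x \<otimes> inv z) \<otimes> inv y)"
  using assms by (simp add: m_assoc inv_mult_group)

lemma comm_inv:
  assumes "x \<in> carrier G" "y \<in> carrier G"
  shows "inv (x \<otimes> y \<otimes> inv x \<otimes> inv y) = y \<otimes> x \<otimes> inv y \<otimes> inv x"
  using assms by (simp add: m_assoc inv_mult_group)

lemma center_trivial:
  assumes fin: "finite (carrier G)" and sq: "sqf (order G)"
    and dcomm: "\<forall>x\<in>derived G (carrier G). \<forall>y\<in>derived G (carrier G). x \<otimes> y = y \<otimes> x"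
    and a0: "a0 \<in> carrier G" and gen: "generate G {a0} = derived G (carrier G)"
    and b: "b \<in> carrier G" and pr: "generate G {b} <#> derived G (carrier G) = carrier G"
  shows "derived G (carrier G) \<inter> group_center G = {\<one>}"
proof -
  let ?D = "derived G (carrier G)"
  have sD: "subgroup ?D G" using derived_is_subgroup by simp
  have nD: "\<forall>g\<in>carrier G. \<forall>x\<in>?D. g \<otimes> x \<otimes> inv g \<in> ?D"
    using derived_self_is_normal normal_inv_iff by blast
  have Dc: "?D \<subseteq> carrier G" using sD subgroup.subset by blast
  define m where "m = card ?D"
  have oa: "ord a0 = m" using generate_pow_card[OF a0] gen m_def by simp
  have mpos: "m > 0" using ord_ge_1[OF fin a0] oa by simp
  have mdvd: "m dvd order G" using sub_card_dvd_order[OF fin sD] m_def by simp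
  have "\<one> \<in> group_center G" unfolding group_center_def by simp
  moreover have "\<one> \<in> ?D" using sD subgroup.one_closed by blast
  moreover have False if z: "z \<in> ?D" "z \<in> group_center G" "z \<noteq> \<one>" for z
  proof -
    have zc: "z \<in> carrier G" using z Dc by blast
    have "ord z \<ge> 1" using ord_ge_1[OF fin zc] .
    moreover have "ord z \<noteq> 1" using ord_eq_1[OF zc] z by simp
    ultimately obtain q where q: "Factorial_Ring.prime q" "q dvd ord z" using prime_factor_nat by blast
    obtain s where s: "ord z = q * s" using q by blast
    have spos: "s > 0" using s \<open>ord z \<ge> 1\<close> by (metis gr0I mult_0_right not_one_le_zero)
    define y where "y = z [^] s"
    have oy: "ord y = q" unfolding y_def using ord_pow[OF zc, of s] s spos by simp
    have yD: "y \<in> ?D" unfolding y_def using nat_pow_in_sub[OF sD z(1)] .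
    have yZ: "y \<in> group_center G" unfolding y_def using center_npow[OF z(2)] .
    have yc: "y \<in> carrier G" using yD Dc by blast
    have "q dvd m" using ord_in_sub_dvd[OF fin sD yD] oy m_def by simp
    then obtain k where k: "m = q * k" by blast
    have kpos: "k > 0" using k mpos by auto
    have qpos: "q > 0" using q prime_gt_0_nat by blast
    define w where "w = a0 [^] k"
    have wc: "w \<in> carrier G" using a0 w_def by simp
    have ow: "ord w = q" unfolding w_def using ord_pow[OF a0, of k] oa k kpos by simp
    obtain t :: int where t: "y = a0 [^] t" using yD gen generate_pow[OF a0] by blast
    have "y [^] q = \<one>" using pow_ord_eq_1[OF yc] oy by simp
    then have "a0 [^] (t * int q) = \<one>" using t a0 by (simp add: int_pow_pow[symmetric] int_pow_int[symmetric])
    then have "int m dvd t * int q" using int_pow_eq_id[OF a0] oa by simp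
    then have "int k * int q dvd t * int q" using k by (simp add: mult.commute)
    then have "int k dvd t" using qpos by simp
    then obtain t' where t': "t = int k * t'" by blast
    have ywt: "y = w [^] t'" using t t' a0 unfolding w_def by (simp add: int_pow_pow int_pow_int[symmetric])
    have "generate G {y} \<subseteq> generate G {w}"
      using generate_subgroup_incl[of "{y}" "generate G {w}"] generate_is_subgroup wc ywt
        subgroup_int_pow_closed[OF generate_is_subgroup[of "{w}"]] generate.incl[of w "{w}" G] by auto
    moreover have "card (generate G {y}) = card (generate G {w})"
      using generate_pow_card[OF yc] generate_pow_card[OF wc] oy ow by simp
    ultimately have "generate G {y} = generate G {w}"
      using sub_eq_card[OF fin generate_is_subgroup[of "{w}"]] wc by simp
    then have "w \<in> generate G {y}" using generate.incl[of w "{w}" G] by simp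
    then obtain s' :: int where "w = y [^] s'" using generate_pow[OF yc] by blast
    then have wZ: "w \<in> group_center G" using center_pow[OF yZ] by simp
    have kc: "x [^] k \<in> group_center G" if x: "x \<in> ?D" for x
    proof -
      obtain i :: int where i: "x = a0 [^] i" using x gen generate_pow[OF a0] by blast
      have "x [^] k = x [^] (int k)" by (simp add: int_pow_int)
      also have "\<dots> = a0 [^] (i * int k)" using i a0 by (simp add: int_pow_pow)
      also have "\<dots> = w [^] i" unfolding w_def using a0 by (simp add: int_pow_pow int_pow_int[symmetric] mult.commute)
      finally show ?thesis using center_pow[OF wZ] by simp
    qed
    define J where "J = {x \<in> ?D. x [^] k = \<one>}"
    have sJ: "subgroup J G"
    proof (rule subgroupI)
      show "J \<subseteq> carrier G" using Dc J_def by blast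
      show "J \<noteq> {}" using sD subgroup.one_closed J_def by fastforce
    next
      fix x assume x: "x \<in> J"
      then have "x \<in> ?D" "x [^] k = \<one>" using J_def by auto
      then have "inv x \<in> ?D" "(inv x) [^] k = \<one>" using subgroup.m_inv_closed[OF sD] Dc by (auto simp: nat_pow_inv)
      then show "inv x \<in> J" unfolding J_def by simp
    next
      fix x x' assume x: "x \<in> J" and x': "x' \<in> J"
      then have xs: "x \<in> ?D" "x [^] k = \<one>" "x' \<in> ?D" "x' [^] k = \<one>" using J_def by auto
      have xc: "x \<in> carrier G" "x' \<in> carrier G" using xs Dc by auto
      have "x \<otimes> x' = x' \<otimes> x" using dcomm xs by blast
      then have "(x \<otimes> x') [^] k = \<one>" using pow_mult_distrib[of x x' k] xc xs by simp
      moreover have "x \<otimes> x' \<in> ?D" using subgroup.m_closed[OF sD xs(1) xs(3)] .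
      ultimately show "x \<otimes> x' \<in> J" unfolding J_def by simp
    qed
    have JD: "J \<subseteq> ?D" using J_def by blast
    have nJ: "g \<otimes> x \<otimes> inv g \<in> J" if g: "g \<in> carrier G" and x: "x \<in> J" for g x
    proof -
      have xD: "x \<in> ?D" and xk: "x [^] k = \<one>" using x J_def by auto
      have xc: "x \<in> carrier G" using xD Dc by blast
      have "(g \<otimes> x \<otimes> inv g) [^] k = (g \<otimes> x \<otimes> inv g) [^] (int k)" by (simp add: int_pow_int)
      also have "\<dots> = g \<otimes> x [^] (int k) \<otimes> inv g" using conj_pow[OF g xc] by simp
      also have "\<dots> = \<one>" using xk g by (simp add: int_pow_int)
      finally show ?thesis using nD g xD J_def by blast
    qed
    have cJ: "c \<otimes> x \<otimes> inv c \<otimes> inv x \<in> J" if c: "c \<in> carrier G" and x: "x \<in> ?D" for c x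
    proof -
      have xc: "x \<in> carrier G" using x Dc by blast
      let ?u = "c \<otimes> x \<otimes> inv c"
      have uD: "?u \<in> ?D" using nD c x by blast
      have ixD: "inv x \<in> ?D" using subgroup.m_inv_closed[OF sD x] .
      have cu: "?u \<otimes> inv x = inv x \<otimes> ?u" using dcomm uD ixD by blast
      have "(?u \<otimes> inv x) [^] k = ?u [^] k \<otimes> (inv x) [^] k" using pow_mult_distrib[OF cu] c xc by simp
      also have "?u [^] k = c \<otimes> x [^] k \<otimes> inv c"
        using conj_pow[OF c xc, of "int k"] by (simp add: int_pow_int)
      also have "\<dots> = x [^] k"
      proof -
        have cz: "x [^] k \<otimes> c = c \<otimes> x [^] k" using kc[OF x] c unfolding group_center_def by blast
        have "c \<otimes> x [^] k \<otimes> inv c = x [^] k \<otimes> c \<otimes> inv c" using cz by simp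
        also have "\<dots> = x [^] k" using c xc by (simp add: m_assoc)
        finally show ?thesis .
      qed
      also have "(inv x) [^] k = inv (x [^] k)" using xc by (simp add: nat_pow_inv)
      finally have "(?u \<otimes> inv x) [^] k = \<one>" using xc by simp
      moreover have "?u \<otimes> inv x \<in> ?D" using subgroup.m_closed[OF sD uD ixD] .
      ultimately show ?thesis using J_def by simp
    qed
    have bb: "b [^] i \<otimes> b [^] j \<otimes> inv (b [^] i) \<otimes> inv (b [^] j) = \<one>" for i j :: int
    proof -
      have "b [^] i \<otimes> b [^] j = b [^] j \<otimes> b [^] i" using b by (simp add: int_pow_mult[symmetric] add.commute)
      then show ?thesis using b by (simp add: m_assoc inv_mult_group[symmetric])
    qed
    have repr: "\<exists>i::int. \<exists>d\<in>?D. u = b [^] i \<otimes> d" if u: "u \<in> carrier G" for u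
    proof -
      have "u \<in> generate G {b} <#> ?D" using pr u by simp
      then obtain h d where hd: "h \<in> generate G {b}" "d \<in> ?D" "u = h \<otimes> d" unfolding set_mult_def by blast
      then obtain i :: int where "h = b [^] i" using generate_pow[OF b] by blast
      then show ?thesis using hd by blast
    qed
    have allJ: "u \<otimes> v \<otimes> inv u \<otimes> inv v \<in> J" if u: "u \<in> carrier G" and v: "v \<in> carrier G" for u v
    proof -
      obtain i :: int and d where i: "d \<in> ?D" "u = b [^] i \<otimes> d" using repr[OF u] by blast
      obtain j :: int and e where j: "e \<in> ?D" "v = b [^] j \<otimes> e" using repr[OF v] by blast
      have dc: "d \<in> carrier G" "e \<in> carrier G" using i j Dc by auto
      let ?bi = "b [^] i" and ?bj = "b [^] j"
      have bic: "?bi \<in> carrier G" "?bj \<in> carrier G" using b by auto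
      have "d \<otimes> v \<otimes> inv d \<otimes> inv v = inv (v \<otimes> d \<otimes> inv v \<otimes> inv d)" using comm_inv[OF v dc(1)] by simp
      moreover have "v \<otimes> d \<otimes> inv v \<otimes> inv d \<in> J" using cJ[OF v i(1)] .
      ultimately have dv: "d \<otimes> v \<otimes> inv d \<otimes> inv v \<in> J" using subgroup.m_inv_closed[OF sJ] by metis
      have "?bi \<otimes> e \<otimes> inv ?bi \<otimes> inv e \<in> J" using cJ[OF bic(1) j(1)] .
      then have "?bj \<otimes> (?bi \<otimes> e \<otimes> inv ?bi \<otimes> inv e) \<otimes> inv ?bj \<in> J" using nJ bic by blast
      moreover have "?bi \<otimes> v \<otimes> inv ?bi \<otimes> inv v =
          (?bi \<otimes> ?bj \<otimes> inv ?bi \<otimes> inv ?bj) \<otimes> (?bj \<otimes> (?bi \<otimes> e \<otimes> inv ?bi \<otimes> inv e) \<otimes> inv ?bj)"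
        using comm_id2[OF bic(1) bic(2) dc(2)] j(2) by simp
      ultimately have bv: "?bi \<otimes> v \<otimes> inv ?bi \<otimes> inv v \<in> J" using bb bic dc by simp
      have "u \<otimes> v \<otimes> inv u \<otimes> inv v =
          ?bi \<otimes> (d \<otimes> v \<otimes> inv d \<otimes> inv v) \<otimes> inv ?bi \<otimes> (?bi \<otimes> v \<otimes> inv ?bi \<otimes> inv v)"
        using comm_id1[OF bic(1) dc(1) v] i(2) by simp
      moreover have "?bi \<otimes> (d \<otimes> v \<otimes> inv d \<otimes> inv v) \<otimes> inv ?bi \<in> J" using nJ[OF bic(1) dv] .
      ultimately show ?thesis using subgroup.m_closed[OF sJ _ bv] by simp
    qed
    have "?D \<subseteq> J" unfolding derived_def
      by (rule generate_subgroup_incl[OF _ sJ]) (use allJ in blast)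
    then have "y [^] k = \<one>" using yD J_def by blast
    then have "q dvd k" using pow_eq_id[OF yc] oy by simp
    then have "q^2 dvd m" using k by (simp add: power2_eq_square)
    then have "q^2 dvd order G" using mdvd dvd_trans by blast
    then show False using sq q unfolding sqf_def by blast
  qed
  ultimately show ?thesis by blast
qed

end


context group begin

lemma tau_gcd:
  assumes fin: "finite (carrier G)"
    and dcomm: "\<forall>x\<in>derived G (carrier G). \<forall>y\<in>derived G (carrier G). x \<otimes> y = y \<otimes> x"
    and a0: "a0 \<in> carrier G" and gen: "generate G {a0} = derived G (carrier G)"
    and Z: "derived G (carrier G) \<inter> group_center G = {\<one>}"
    and b: "b \<in> carrier G" and pr: "generate G {b} <#> derived G (carrier G) = carrier G"
    and tau: "\<forall>x \<in> derived G (carrier G). inv b \<otimes> x \<otimes> b = x [^] (\<tau>::int)"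
  shows "gcd (\<tau> - 1) (int (card (derived G (carrier G)))) = 1"
proof (rule ccontr)
  let ?D = "derived G (carrier G)"
  assume ne: "gcd (\<tau> - 1) (int (card ?D)) \<noteq> 1"
  have sD: "subgroup ?D G" using derived_is_subgroup by simp
  have Dc: "?D \<subseteq> carrier G" using sD subgroup.subset by blast
  define m where "m = card ?D"
  have oa: "ord a0 = m" using generate_pow_card[OF a0] gen m_def by simp
  have mpos: "m > 0" using ord_ge_1[OF fin a0] oa by simp
  define g where "g = gcd (\<tau> - 1) (int m)"
  have gpos: "g > 0" using mpos g_def by simp
  have "nat g \<noteq> 1" using ne gpos g_def m_def by auto
  then obtain q where q: "Factorial_Ring.prime q" "q dvd nat g" using prime_factor_nat by blast
  have "int q dvd int (nat g)" using q(2) by (simp only: int_dvd_int_iff)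
  then have "int q dvd g" using gpos by simp
  then have qt: "int q dvd \<tau> - 1" and qm: "int q dvd int m" unfolding g_def by auto
  then have "q dvd m" by simp
  then obtain k where k: "m = q * k" by blast
  have kpos: "k > 0" using k mpos by auto
  define w where "w = a0 [^] k"
  have wc: "w \<in> carrier G" using a0 w_def by simp
  have ow: "ord w = q" unfolding w_def using ord_pow[OF a0, of k] oa k kpos by simp
  have a0D: "a0 \<in> ?D" using gen generate.incl[of a0 "{a0}" G] by blast
  have wD: "w \<in> ?D" unfolding w_def using nat_pow_in_sub[OF sD a0D] .
  have "w [^] (\<tau> - 1) = \<one>" using int_pow_eq_id[OF wc] ow qt by simp
  then have "w [^] \<tau> = w" using wc int_pow_mult[OF wc, of "\<tau> - 1" 1] by simp
  then have "inv b \<otimes> w \<otimes> b = w" using tau wD by simp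
  then have wb: "w \<otimes> b = b \<otimes> w" using b wc by (metis inv_closed inv_solve_left m_assoc m_closed)
  have "w \<in> group_center G"
    unfolding group_center_def
  proof (intro CollectI conjI ballI)
    show "w \<in> carrier G" by fact
    fix u assume u: "u \<in> carrier G"
    have "u \<in> generate G {b} <#> ?D" using pr u by simp
    then obtain h d where hd: "h \<in> generate G {b}" "d \<in> ?D" "u = h \<otimes> d" unfolding set_mult_def by blast
    then obtain i :: int where i: "h = b [^] i" using generate_pow[OF b] by blast
    have dc: "d \<in> carrier G" using hd Dc by blast
    have "b [^] i \<otimes> w = w \<otimes> b [^] i" using conj_comm_pow[OF b wc] wb by simp
    moreover have "w \<otimes> d = d \<otimes> w" using dcomm wD hd by blast
    ultimately have c1: "b [^] i \<otimes> w = w \<otimes> b [^] i" and c2: "w \<otimes> d = d \<otimes> w" by auto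
    have bi: "b [^] i \<in> carrier G" using b by simp
    have "w \<otimes> u = (w \<otimes> b [^] i) \<otimes> d" using hd i bi wc dc by (simp add: m_assoc)
    also have "\<dots> = (b [^] i \<otimes> w) \<otimes> d" using c1 by simp
    also have "\<dots> = b [^] i \<otimes> (w \<otimes> d)" using bi wc dc by (simp add: m_assoc)
    also have "\<dots> = b [^] i \<otimes> (d \<otimes> w)" using c2 by simp
    also have "\<dots> = (b [^] i \<otimes> d) \<otimes> w" using bi wc dc by (simp add: m_assoc)
    finally show "w \<otimes> u = u \<otimes> w" using hd i by simp
  qed
  then have "w = \<one>" using Z wD by blast
  then have "q = 1" using ow by simp
  then show False using q(1) by simp
qed

end


context group begin

lemma main_result:
  fixes p :: nat
  assumes "finite (carrier G)"
    and "Factorial_Ring.prime p" and "p \<ge> 7"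
    and "order G = 30 * p"
  shows "cyclic_group (subgroup_generated G (derived G (carrier G)))
    \<and> derived G (carrier G) \<inter> group_center G = {\<one>\<^bsub>G\<^esub>}
    \<and> (\<exists>n::nat. n > 0 \<and> (\<exists>b. cyclic_complement_gen G (derived G (carrier G)) b
            \<and> group.ord G b = n))
    \<and> (\<forall>b. cyclic_complement_gen G (derived G (carrier G)) b \<longrightarrow>
         (\<forall>\<tau>::int. (\<forall>x \<in> derived G (carrier G).
               inv\<^bsub>G\<^esub> b \<otimes>\<^bsub>G\<^esub> x \<otimes>\<^bsub>G\<^esub> b = x [^]\<^bsub>G\<^esub> \<tau>)
            \<longrightarrow> gcd (\<tau> - 1) (int (card (derived G (carrier G)))) = 1))"
proof -
  have fin: "finite (carrier G)" and p: "Factorial_Ring.prime p" "p \<ge> 7" and o: "order G = 30 * p"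
    using assms by auto
  let ?D = "derived G (carrier G)"
  obtain P where P: "subgroup P G" "card P = p" and nPe: "\<forall>g\<in>carrier G. \<forall>h\<in>P. g \<otimes> h \<otimes> inv g \<in> P"
    using normal_p[OF fin p o] by blast
  have "card P \<ge> 2" using P p prime_ge_2_nat by simp
  then have "card (P - {\<one>}) > 0" using finite_sub[OF fin P(1)] subgroup.one_closed[OF P(1)]
    by (simp add: card_Diff_singleton)
  then obtain a where a: "a \<in> P" "a \<noteq> \<one>" by (metis Diff_iff card_gt_0_iff ex_in_conv singletonI)
  have genP: "generate G {a} = P" using prime_sub_gen(1)[OF fin P(1) _ a] P p by simp
  have ac: "a \<in> carrier G" using a P subgroup.subset by blast
  have nP: "generate G {a} \<lhd> G" using normal_inv_iff P nPe genP by simp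
  interpret NP: normal "generate G {a}" G by fact
  interpret QG: group "G Mod (generate G {a})" using NP.factorgroup_is_group .
  have "card (rcosets P) * card P = order G" using lagrange[OF P(1)] .
  then have "order (G Mod (generate G {a})) = 30" using genP P o p prime_gt_0_nat
    unfolding order_def FactGroup_def by simp
  then have c: "\<exists>c\<in>carrier (G Mod (generate G {a})).
      derived (G Mod (generate G {a})) (carrier (G Mod (generate G {a}))) \<subseteq> range (\<lambda>i::int. c [^]\<^bsub>G Mod (generate G {a})\<^esub> i)"
    using QG.order30[OF finite_mod[OF fin]] by blast
  have dcomm: "\<forall>x\<in>?D. \<forall>y\<in>?D. x \<otimes> y = y \<otimes> x" using lemmaQ[OF fin ac nP c] .
  have sq: "sqf (order G)" using sqf30p[OF p] o by simp
  have sD: "subgroup ?D G" using derived_is_subgroup by simp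
  interpret GD: group "G\<lparr>carrier := ?D\<rparr>" using sD subgroup_imp_group by blast
  have "comm_group (G\<lparr>carrier := ?D\<rparr>)" using GD.group_comm_groupI dcomm by simp
  then interpret CD: comm_group "G\<lparr>carrier := ?D\<rparr>" .
  have "sqf (card ?D)" using sqf_dvd[OF sq sub_card_dvd_order[OF fin sD]] .
  then have cyc: "cyclic_group (G\<lparr>carrier := ?D\<rparr>)"
    using CD.sqf_cyclic finite_sub[OF fin sD] unfolding order_def by simp
  have sg: "subgroup_generated G ?D = G\<lparr>carrier := ?D\<rparr>"
    using subgroup.carrier_subgroup_generated_subgroup[OF sD] unfolding subgroup_generated_def by simp
  have part1: "cyclic_group (subgroup_generated G ?D)" using cyc sg by simp
  obtain a0 where a0: "a0 \<in> ?D" "?D = range (\<lambda>n::int. a0 [^]\<^bsub>G\<lparr>carrier := ?D\<rparr>\<^esub> n)"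
    using cyc GD.cyclic_group by auto
  have a0c: "a0 \<in> carrier G" using a0 sD subgroup.subset by blast
  have "?D = range (\<lambda>n::int. a0 [^] n)" using a0 int_pow_consistent[OF sD a0(1)] by simp
  then have gen: "generate G {a0} = ?D" using generate_pow[OF a0c] by auto
  obtain b where b: "b \<in> carrier G" "ord b > 0" "generate G {b} \<inter> ?D = {\<one>}" "generate G {b} <#> ?D = carrier G"
    using complement_exists[OF fin derived_self_is_normal derived_quot_is_comm_group sq] by blast
  have part3: "\<exists>n::nat. n > 0 \<and> (\<exists>b. cyclic_complement_gen G ?D b \<and> ord b = n)"
    using b unfolding cyclic_complement_gen_def by blast
  have part2: "?D \<inter> group_center G = {\<one>}" using center_trivial[OF fin sq dcomm a0c gen b(1) b(4)] .
  have part4: "\<forall>b. cyclic_complement_gen G ?D b \<longrightarrow>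
         (\<forall>\<tau>::int. (\<forall>x \<in> ?D. inv b \<otimes> x \<otimes> b = x [^] \<tau>) \<longrightarrow> gcd (\<tau> - 1) (int (card ?D)) = 1)"
  proof (intro allI impI)
    fix b' \<tau> assume cc: "cyclic_complement_gen G ?D b'" and t: "\<forall>x \<in> ?D. inv b' \<otimes> x \<otimes> b' = x [^] (\<tau>::int)"
    have "b' \<in> carrier G" "generate G {b'} <#> ?D = carrier G" using cc unfolding cyclic_complement_gen_def by auto
    then show "gcd (\<tau> - 1) (int (card ?D)) = 1" using tau_gcd[OF fin dcomm a0c gen part2 _ _ t] by blast
  qed
  show ?thesis using part1 part2 part3 part4 by blast
qed

end

theorem lemma2p10:
  fixes G :: "('a, 'b) monoid_scheme" and p :: nat
  assumes "group G" and "finite (carrier G)"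
    and "Factorial_Ring.prime p" and "p \<ge> 7"
    and "order G = 30 * p"
  shows "cyclic_group (subgroup_generated G (derived G (carrier G)))
    \<and> derived G (carrier G) \<inter> group_center G = {\<one>\<^bsub>G\<^esub>}
    \<and> (\<exists>n::nat. n > 0 \<and> (\<exists>b. cyclic_complement_gen G (derived G (carrier G)) b
            \<and> group.ord G b = n))
    \<and> (\<forall>b. cyclic_complement_gen G (derived G (carrier G)) b \<longrightarrow>
         (\<forall>\<tau>::int. (\<forall>x \<in> derived G (carrier G).
               inv\<^bsub>G\<^esub> b \<otimes>\<^bsub>G\<^esub> x \<otimes>\<^bsub>G\<^esub> b = x [^]\<^bsub>G\<^esub> \<tau>)
            \<longrightarrow> gcd (\<tau> - 1) (int (card (derived G (carrier G)))) = 1))"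
  using group.main_result[OF assms] .


end
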